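(* Let $\Delta\geq3$ be an integer and $(\beta,\gamma)$ antiferromagnetic, $\lambda>0$, with $(\beta,\gamma,\lambda)\neq(\beta,\beta,1)$. Suppose there exists a pair of field gadgets $\mathcal{T}_1,\mathcal{T}_2$ of maximum degree $\Delta$ with $R_{\mathcal{T}_1}=R_{\mathcal{T}_2}$ but $M_{\mathcal{T}_1}\neq M_{\mathcal{T}_2}$. Then one can construct, for $j=0,1,2,\dots$, an infinite sequence of pairs of field gadgets $\mathcal{T}_{1,j},\mathcal{T}_{2,j}$ of maximum degree $\Delta$ with effective fields $R_{1,j},R_{2,j}$ and magnetization gaps $M_{1,j},M_{2,j}$ such that $R_{1,j}=R_{2,j}$ and $M_{1,j}\neq M_{2,j}$ for every $j$, and moreover the values $R_{1,j}$, $j\geq0$, are pairwise distinct.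
   Context: A pair $(\beta,\gamma)$ with $\beta,\gamma\geq0$ is antiferromagnetic if $\beta\gamma\in[0,1)$ and at least one is nonzero. For a graph $G=(V,E)$ and $\lambda>0$, $\mu_{G;\beta,\gamma,\lambda}(\sigma)=\lambda^{|\sigma|}\beta^{m_0(\sigma)}\gamma^{m_1(\sigma)}/Z$ for $\sigma:V\to\{0,1\}$, $|\sigma|=\sum_v\sigma(v)$, $m_0,m_1$ the numbers of edges with both endpoints spin $0$, resp. spin $1$, convention $0^0=1$. A field gadget is a rooted tree $\mathcal{T}$ whose root $\rho$ has degree one; in the special case $\lambda=\frac{1-\beta}{1-\gamma}$ with $\beta\neq\gamma$, a field gadget is such a rooted tree in which in addition a triangle is attached on a subset of the leaves. With $\mu=\mu_{\mathcal{T};\beta,\gamma,\lambda}$, the effective field is $R_{\mathcal{T}}=\frac{1}{\lambda}\frac{\mu(\sigma(\rho)=1)}{\mu(\sigma(\rho)=0)}$ and the magnetization gap is $M_{\mathcal{T}}=\mathbf{E}_\mu[|\sigma|\mid\sigma(\rho)=1]-\mathbf{E}_\mu[|\sigma|\mid\sigma(\rho)=0]$. *)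

theory Defs
  imports Complex_Main
begin

type_synonym graph = "nat set \<times> nat set set"
type_synonym rgraph = "nat set \<times> nat set set \<times> nat"

definition simple_graph :: "nat set \<Rightarrow> nat set set \<Rightarrow> bool" where
  "simple_graph V E \<longleftrightarrow> finite V \<and> (\<forall>e\<in>E. e \<subseteq> V \<and> card e = 2)"

definition adj :: "nat set set \<Rightarrow> nat \<Rightarrow> nat \<Rightarrow> bool" where
  "adj E u v \<longleftrightarrow> {u, v} \<in> E"

definition degree :: "nat set set \<Rightarrow> nat \<Rightarrow> nat" where
  "degree E v = card {e \<in> E. v \<in> e}"

definition max_degree_le :: "nat set \<Rightarrow> nat set set \<Rightarrow> nat \<Rightarrow> bool" where
  "max_degree_le V E D \<longleftrightarrow> (\<forall>v\<in>V. degree E v \<le> D)"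

definition connected_graph :: "nat set \<Rightarrow> nat set set \<Rightarrow> bool" where
  "connected_graph V E \<longleftrightarrow> (\<forall>u\<in>V. \<forall>v\<in>V. (adj E)\<^sup>*\<^sup>* u v)"

definition has_cycle :: "nat set \<Rightarrow> nat set set \<Rightarrow> bool" where
  "has_cycle V E \<longleftrightarrow> (\<exists>xs. length xs \<ge> 3 \<and> distinct xs \<and> set xs \<subseteq> V \<and>
      (\<forall>i<length xs. adj E (xs ! i) (xs ! ((i + 1) mod length xs))))"

definition is_tree :: "nat set \<Rightarrow> nat set set \<Rightarrow> bool" where
  "is_tree V E \<longleftrightarrow> simple_graph V E \<and> V \<noteq> {} \<and> connected_graph V E \<and> \<not> has_cycle V E"

definition root_deg1_tree :: "nat set \<Rightarrow> nat set set \<Rightarrow> nat \<Rightarrow> bool" where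
  "root_deg1_tree V E r \<longleftrightarrow> is_tree V E \<and> r \<in> V \<and> degree E r = 1"

definition tree_with_triangles ::
  "nat set \<Rightarrow> nat set set \<Rightarrow> nat \<Rightarrow> nat set \<Rightarrow> nat set set \<Rightarrow> bool" where
  "tree_with_triangles V' E' r V E \<longleftrightarrow> root_deg1_tree V E r \<and>
     (\<exists>L a b. L \<subseteq> {l \<in> V. degree E l = 1 \<and> l \<noteq> r} \<and>
        inj_on a L \<and> inj_on b L \<and> a ` L \<inter> V = {} \<and> b ` L \<inter> V = {} \<and> a ` L \<inter> b ` L = {} \<and>
        V' = V \<union> a ` L \<union> b ` L \<and>
        E' = E \<union> (\<Union>l\<in>L. {{l, a l}, {l, b l}, {a l, b l}}))"

definition antiferromagnetic :: "real \<Rightarrow> real \<Rightarrow> bool" where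
  "antiferromagnetic \<beta> \<gamma> \<longleftrightarrow> \<beta> \<ge> 0 \<and> \<gamma> \<ge> 0 \<and> 0 \<le> \<beta> * \<gamma> \<and> \<beta> * \<gamma> < 1 \<and> (\<beta> \<noteq> 0 \<or> \<gamma> \<noteq> 0)"

definition field_gadget :: "real \<Rightarrow> real \<Rightarrow> real \<Rightarrow> rgraph \<Rightarrow> bool" where
  "field_gadget \<beta> \<gamma> lam T = (case T of (V, E, r) \<Rightarrow>
     (if lam = (1 - \<beta>) / (1 - \<gamma>) \<and> \<beta> \<noteq> \<gamma>
      then (\<exists>V0 E0. tree_with_triangles V E r V0 E0)
      else root_deg1_tree V E r))"

text \<open>A configuration \<sigma> : V \<rightarrow> {0,1} is identified with the set S = \<sigma>^{-1}(1) \<subseteq> V.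
  Its weight is lam^|S| \<beta>^{m_0} \<gamma>^{m_1} (with 0^0 = 1).\<close>
definition m0 :: "nat set set \<Rightarrow> nat set \<Rightarrow> nat" where
  "m0 E S = card {e \<in> E. e \<inter> S = {}}"

definition m1 :: "nat set set \<Rightarrow> nat set \<Rightarrow> nat" where
  "m1 E S = card {e \<in> E. e \<subseteq> S}"

definition weight :: "real \<Rightarrow> real \<Rightarrow> real \<Rightarrow> nat set set \<Rightarrow> nat set \<Rightarrow> real" where
  "weight \<beta> \<gamma> lam E S = lam ^ card S * \<beta> ^ m0 E S * \<gamma> ^ m1 E S"

definition Zpart :: "real \<Rightarrow> real \<Rightarrow> real \<Rightarrow> nat set \<Rightarrow> nat set set \<Rightarrow> real" where
  "Zpart \<beta> \<gamma> lam V E = (\<Sum>S\<in>Pow V. weight \<beta> \<gamma> lam E S)"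

definition gibbs_prob ::
  "real \<Rightarrow> real \<Rightarrow> real \<Rightarrow> nat set \<Rightarrow> nat set set \<Rightarrow> (nat set \<Rightarrow> bool) \<Rightarrow> real" where
  "gibbs_prob \<beta> \<gamma> lam V E P =
     (\<Sum>S\<in>{S \<in> Pow V. P S}. weight \<beta> \<gamma> lam E S) / Zpart \<beta> \<gamma> lam V E"

definition gibbs_cond_exp ::
  "real \<Rightarrow> real \<Rightarrow> real \<Rightarrow> nat set \<Rightarrow> nat set set \<Rightarrow> (nat set \<Rightarrow> real) \<Rightarrow> (nat set \<Rightarrow> bool) \<Rightarrow> real" where
  "gibbs_cond_exp \<beta> \<gamma> lam V E f P =
     (\<Sum>S\<in>{S \<in> Pow V. P S}. f S * (weight \<beta> \<gamma> lam E S / Zpart \<beta> \<gamma> lam V E))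
       / gibbs_prob \<beta> \<gamma> lam V E P"

definition eff_field :: "real \<Rightarrow> real \<Rightarrow> real \<Rightarrow> rgraph \<Rightarrow> real" where
  "eff_field \<beta> \<gamma> lam T = (case T of (V, E, r) \<Rightarrow>
     (1 / lam) * (gibbs_prob \<beta> \<gamma> lam V E (\<lambda>S. r \<in> S) / gibbs_prob \<beta> \<gamma> lam V E (\<lambda>S. r \<notin> S)))"

definition mag_gap :: "real \<Rightarrow> real \<Rightarrow> real \<Rightarrow> rgraph \<Rightarrow> real" where
  "mag_gap \<beta> \<gamma> lam T = (case T of (V, E, r) \<Rightarrow>
     gibbs_cond_exp \<beta> \<gamma> lam V E (\<lambda>S. real (card S)) (\<lambda>S. r \<in> S)
     - gibbs_cond_exp \<beta> \<gamma> lam V E (\<lambda>S. real (card S)) (\<lambda>S. r \<notin> S))"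

definition gadget_max_degree_le :: "rgraph \<Rightarrow> nat \<Rightarrow> bool" where
  "gadget_max_degree_le T D = (case T of (V, E, r) \<Rightarrow> max_degree_le V E D)"

end

theory Submission
  imports Defs
begin

definition ew :: "real \<Rightarrow> real \<Rightarrow> nat set \<Rightarrow> nat set \<Rightarrow> real" where
  "ew b g S e = (if e \<inter> S = {} then b else if e \<subseteq> S then g else 1)"

lemma card_filter_insert:
  "finite E \<Longrightarrow> e \<notin> E \<Longrightarrow> card {x\<in>insert e E. P x} = card {x\<in>E. P x} + (if P e then 1 else 0)"
proof -
  assume f: "finite E" and n: "e \<notin> E"
  have "{x\<in>insert e E. P x} = (if P e then insert e {x\<in>E. P x} else {x\<in>E. P x})" by auto
  then show ?thesis using f n by auto
qed

lemma pow_prod: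
  assumes "finite E" "\<forall>e\<in>E. e \<noteq> {}"
  shows "b ^ m0 E S * g ^ m1 E S = (\<Prod>e\<in>E. ew b g S e)"
  using assms
proof (induction E rule: finite_induct)
  case empty
  then show ?case by (simp add: m0_def m1_def)
next
  case (insert e E)
  have m0: "m0 (insert e E) S = m0 E S + (if e \<inter> S = {} then 1 else 0)"
    unfolding m0_def using card_filter_insert[OF insert(1,2), of "\<lambda>x. x \<inter> S = {}"] by simp
  have m1: "m1 (insert e E) S = m1 E S + (if e \<subseteq> S then 1 else 0)"
    unfolding m1_def using card_filter_insert[OF insert(1,2), of "\<lambda>x. x \<subseteq> S"] by simp
  have ne: "e \<noteq> {}" using insert by auto
  have "b ^ m0 (insert e E) S * g ^ m1 (insert e E) S = (b ^ m0 E S * g ^ m1 E S) * ew b g S e"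
    unfolding m0 m1 ew_def using ne by (auto simp: power_add)
  also have "\<dots> = (\<Prod>e\<in>insert e E. ew b g S e)" using insert by simp
  finally show ?case .
qed

lemma simple_finite_E: "simple_graph V E \<Longrightarrow> finite E"
  unfolding simple_graph_def
  by (meson Pow_iff finite_Pow_iff finite_subset subsetI)

lemma simple_ne: "simple_graph V E \<Longrightarrow> \<forall>e\<in>E. e \<noteq> {}"
  unfolding simple_graph_def by fastforce

lemma weight_prod:
  assumes "simple_graph V E"
  shows "weight b g l E S = l ^ card S * (\<Prod>e\<in>E. ew b g S e)"
  unfolding weight_def using pow_prod[OF simple_finite_E[OF assms] simple_ne[OF assms]]
  by (simp add: mult.assoc)

lemma sum_pow_union:
  assumes fV: "finite V" and fW: "finite W" and d: "V \<inter> W = {}"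
  shows "(\<Sum>S\<in>Pow (V \<union> W). G (S \<inter> V) (S \<inter> W)) = (\<Sum>A\<in>Pow V. \<Sum>B\<in>Pow W. G A B)"
proof -
  have bij: "bij_betw (\<lambda>(A,B). A \<union> B) (Pow V \<times> Pow W) (Pow (V \<union> W))"
    unfolding bij_betw_def inj_on_def
  proof (intro conjI ballI impI)
    fix p q assume p: "p \<in> Pow V \<times> Pow W" and q: "q \<in> Pow V \<times> Pow W"
      and e: "(case p of (A, B) \<Rightarrow> A \<union> B) = (case q of (A, B) \<Rightarrow> A \<union> B)"
    obtain A B where pAB: "p = (A,B)" by force
    obtain A' B' where qAB: "q = (A',B')" by force
    have "A = (A \<union> B) \<inter> V" "A' = (A' \<union> B') \<inter> V" "B = (A \<union> B) \<inter> W" "B' = (A' \<union> B') \<inter> W"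
      using p q d pAB qAB by auto
    then show "p = q" using e pAB qAB by auto
  next
    show "(\<lambda>(A, B). A \<union> B) ` (Pow V \<times> Pow W) = Pow (V \<union> W)"
    proof
      show "(\<lambda>(A, B). A \<union> B) ` (Pow V \<times> Pow W) \<subseteq> Pow (V \<union> W)" by auto
      show "Pow (V \<union> W) \<subseteq> (\<lambda>(A, B). A \<union> B) ` (Pow V \<times> Pow W)"
      proof
        fix S assume "S \<in> Pow (V \<union> W)"
        then have "S = (\<lambda>(A, B). A \<union> B) (S \<inter> V, S \<inter> W)" "(S \<inter> V, S \<inter> W) \<in> Pow V \<times> Pow W" by auto
        then show "S \<in> (\<lambda>(A, B). A \<union> B) ` (Pow V \<times> Pow W)" by blast
      qed
    qed
  qed
  have "(\<Sum>S\<in>Pow (V \<union> W). G (S \<inter> V) (S \<inter> W))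
      = (\<Sum>p\<in>Pow V \<times> Pow W. G (((\<lambda>(A,B). A \<union> B) p) \<inter> V) (((\<lambda>(A,B). A \<union> B) p) \<inter> W))"
    using sum.reindex_bij_betw[OF bij, of "\<lambda>S. G (S \<inter> V) (S \<inter> W)"] by simp
  also have "\<dots> = (\<Sum>p\<in>Pow V \<times> Pow W. G (fst p) (snd p))"
  proof (rule sum.cong)
    fix p assume "p \<in> Pow V \<times> Pow W"
    then show "G (((\<lambda>(A,B). A \<union> B) p) \<inter> V) (((\<lambda>(A,B). A \<union> B) p) \<inter> W) = G (fst p) (snd p)"
      using d by (cases p) (auto simp: Int_Un_distrib2 Int_absorb2 intro!: arg_cong2[where f=G])
  qed simp
  also have "\<dots> = (\<Sum>A\<in>Pow V. \<Sum>B\<in>Pow W. G A B)"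
    by (simp add: sum.cartesian_product split_beta)
  finally show ?thesis .
qed

definition ZZ :: "real \<Rightarrow> real \<Rightarrow> real \<Rightarrow> nat set \<Rightarrow> nat set set \<Rightarrow> (nat set \<Rightarrow> bool) \<Rightarrow> real" where
  "ZZ b g l V E P = (\<Sum>S\<in>Pow V. if P S then weight b g l E S else 0)"
definition NN :: "real \<Rightarrow> real \<Rightarrow> real \<Rightarrow> nat set \<Rightarrow> nat set set \<Rightarrow> (nat set \<Rightarrow> bool) \<Rightarrow> real" where
  "NN b g l V E P = (\<Sum>S\<in>Pow V. if P S then real (card S) * weight b g l E S else 0)"

definition eww :: "real \<Rightarrow> real \<Rightarrow> bool \<Rightarrow> bool \<Rightarrow> real" where
  "eww b g s t = (if s \<and> t then g else if \<not> s \<and> \<not> t then b else 1)"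

lemma join_weight:
  assumes sV: "simple_graph V E" and sW: "simple_graph W F" and d: "V \<inter> W = {}"
    and x: "x \<in> V" and y: "y \<in> W" and A: "A \<subseteq> V" and B: "B \<subseteq> W"
  shows "weight b g l (insert {x,y} (E \<union> F)) (A \<union> B)
       = weight b g l E A * weight b g l F B * eww b g (x \<in> A) (y \<in> B)"
proof -
  have EV: "\<forall>e\<in>E. e \<subseteq> V \<and> card e = 2" and FW: "\<forall>e\<in>F. e \<subseteq> W \<and> card e = 2"
    using sV sW unfolding simple_graph_def by auto
  have fV: "finite V" and fW: "finite W" using sV sW unfolding simple_graph_def by auto
  have xy: "x \<noteq> y" using x y d by auto
  have sC: "simple_graph (V \<union> W) (insert {x,y} (E \<union> F))"
    unfolding simple_graph_def using EV FW fV fW x y d xy by auto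
  have nin: "{x,y} \<notin> E \<union> F"
  proof
    assume "{x,y} \<in> E \<union> F"
    then have "{x,y} \<subseteq> V \<or> {x,y} \<subseteq> W" using EV FW by blast
    then show False using x y d by blast
  qed
  have EF: "E \<inter> F = {}"
  proof (rule ccontr)
    assume "E \<inter> F \<noteq> {}"
    then obtain e where "e \<in> E" "e \<in> F" by auto
    then have "e \<subseteq> V \<inter> W" "card e = 2" using EV FW by auto
    then show False using d by auto
  qed
  have fE: "finite E" and fF: "finite F" using simple_finite_E sV sW by auto
  have fA: "finite A" and fB: "finite B" using A B fV fW finite_subset by auto
  have cardAB: "card (A \<union> B) = card A + card B"
    using card_Un_disjoint[OF fA fB] A B d by auto
  have pE: "(\<Prod>e\<in>E. ew b g (A \<union> B) e) = (\<Prod>e\<in>E. ew b g A e)"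
  proof (rule prod.cong)
    fix e assume "e \<in> E"
    then have "e \<subseteq> V" using EV by auto
    then have "e \<inter> (A \<union> B) = e \<inter> A" "(e \<subseteq> A \<union> B) = (e \<subseteq> A)" using B d by auto
    then show "ew b g (A \<union> B) e = ew b g A e" unfolding ew_def by simp
  qed simp
  have pF: "(\<Prod>e\<in>F. ew b g (A \<union> B) e) = (\<Prod>e\<in>F. ew b g B e)"
  proof (rule prod.cong)
    fix e assume "e \<in> F"
    then have "e \<subseteq> W" using FW by auto
    then have "e \<inter> (A \<union> B) = e \<inter> B" "(e \<subseteq> A \<union> B) = (e \<subseteq> B)" using A d by auto
    then show "ew b g (A \<union> B) e = ew b g B e" unfolding ew_def by simp
  qed simp
  have exy: "ew b g (A \<union> B) {x,y} = eww b g (x \<in> A) (y \<in> B)"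
    using x y A B d xy unfolding ew_def eww_def by auto
  have "weight b g l (insert {x,y} (E \<union> F)) (A \<union> B)
      = l ^ card (A \<union> B) * (ew b g (A \<union> B) {x,y} * ((\<Prod>e\<in>E. ew b g (A \<union> B) e) * (\<Prod>e\<in>F. ew b g (A \<union> B) e)))"
    using weight_prod[OF sC] nin fE fF EF by (simp add: prod.union_disjoint)
  also have "\<dots> = (l ^ card A * (\<Prod>e\<in>E. ew b g A e)) * (l ^ card B * (\<Prod>e\<in>F. ew b g B e)) * eww b g (x \<in> A) (y \<in> B)"
    unfolding pE pF exy cardAB by (simp add: power_add)
  also have "\<dots> = weight b g l E A * weight b g l F B * eww b g (x \<in> A) (y \<in> B)"
    using weight_prod[OF sV] weight_prod[OF sW] by simp
  finally show ?thesis .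
qed

lemma join_sums:
  assumes sV: "simple_graph V E" and sW: "simple_graph W F" and d: "V \<inter> W = {}"
    and x: "x \<in> V" and y: "y \<in> W"
  shows "ZZ b g l (V \<union> W) (insert {x,y} (E \<union> F)) (\<lambda>S. (x \<in> S \<longleftrightarrow> s) \<and> (y \<in> S \<longleftrightarrow> t))
       = eww b g s t * ZZ b g l V E (\<lambda>A. x \<in> A \<longleftrightarrow> s) * ZZ b g l W F (\<lambda>B. y \<in> B \<longleftrightarrow> t)"
    and "NN b g l (V \<union> W) (insert {x,y} (E \<union> F)) (\<lambda>S. (x \<in> S \<longleftrightarrow> s) \<and> (y \<in> S \<longleftrightarrow> t))
       = eww b g s t * (NN b g l V E (\<lambda>A. x \<in> A \<longleftrightarrow> s) * ZZ b g l W F (\<lambda>B. y \<in> B \<longleftrightarrow> t)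
          + ZZ b g l V E (\<lambda>A. x \<in> A \<longleftrightarrow> s) * NN b g l W F (\<lambda>B. y \<in> B \<longleftrightarrow> t))"
proof -
  have fV: "finite V" and fW: "finite W" using sV sW unfolding simple_graph_def by auto
  let ?C = "insert {x,y} (E \<union> F)"
  let ?P = "\<lambda>A. x \<in> A \<longleftrightarrow> s" and ?Q = "\<lambda>B. y \<in> B \<longleftrightarrow> t"
  have decomp: "\<And>S. S \<in> Pow (V \<union> W) \<Longrightarrow> S = (S \<inter> V) \<union> (S \<inter> W) \<and> (x \<in> S \<longleftrightarrow> x \<in> S \<inter> V) \<and> (y \<in> S \<longleftrightarrow> y \<in> S \<inter> W)"
    using x y by auto
  have cardU: "\<And>A B. A \<subseteq> V \<Longrightarrow> B \<subseteq> W \<Longrightarrow> card (A \<union> B) = card A + card B"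
    using fV fW d by (meson card_Un_disjoint disjoint_iff finite_subset subsetD)
  have "ZZ b g l (V \<union> W) ?C (\<lambda>S. ?P S \<and> ?Q S)
      = (\<Sum>S\<in>Pow (V \<union> W). (\<lambda>A B. if ?P A \<and> ?Q B then weight b g l ?C (A \<union> B) else 0) (S \<inter> V) (S \<inter> W))"
    unfolding ZZ_def
    apply (rule sum.cong, simp)
    subgoal for S proof -
      assume a: "S \<in> Pow (V \<union> W)"
      have e1: "S \<inter> V \<union> S \<inter> W = S" using a by auto
      show ?thesis using x y by (simp add: e1)
    qed
    done
  also have "\<dots> = (\<Sum>A\<in>Pow V. \<Sum>B\<in>Pow W. if ?P A \<and> ?Q B then weight b g l ?C (A \<union> B) else 0)"
    by (rule sum_pow_union[OF fV fW d])
  also have "\<dots> = (\<Sum>A\<in>Pow V. \<Sum>B\<in>Pow W. eww b g s t * ((if ?P A then weight b g l E A else 0) * (if ?Q B then weight b g l F B else 0)))"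
    apply (rule sum.cong, simp, rule sum.cong, simp)
    subgoal for A B using join_weight[OF sV sW d x y, of A B b g l] by auto
    done
  also have "\<dots> = eww b g s t * ((\<Sum>A\<in>Pow V. if ?P A then weight b g l E A else 0) * (\<Sum>B\<in>Pow W. if ?Q B then weight b g l F B else 0))"
    by (subst sum_product) (simp add: sum_distrib_left)
  also have "\<dots> = eww b g s t * ZZ b g l V E ?P * ZZ b g l W F ?Q"
    unfolding ZZ_def by (simp add: mult.assoc)
  finally show "ZZ b g l (V \<union> W) ?C (\<lambda>S. ?P S \<and> ?Q S) = eww b g s t * ZZ b g l V E ?P * ZZ b g l W F ?Q" .
  have "NN b g l (V \<union> W) ?C (\<lambda>S. ?P S \<and> ?Q S)
      = (\<Sum>S\<in>Pow (V \<union> W). (\<lambda>A B. if ?P A \<and> ?Q B then real (card (A \<union> B)) * weight b g l ?C (A \<union> B) else 0) (S \<inter> V) (S \<inter> W))"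
    unfolding NN_def
    apply (rule sum.cong, simp)
    subgoal for S proof -
      assume a: "S \<in> Pow (V \<union> W)"
      have e1: "S \<inter> V \<union> S \<inter> W = S" using a by auto
      show ?thesis using x y by (simp add: e1)
    qed
    done
  also have "\<dots> = (\<Sum>A\<in>Pow V. \<Sum>B\<in>Pow W. if ?P A \<and> ?Q B then real (card (A \<union> B)) * weight b g l ?C (A \<union> B) else 0)"
    by (rule sum_pow_union[OF fV fW d])
  also have "\<dots> = (\<Sum>A\<in>Pow V. \<Sum>B\<in>Pow W. eww b g s t * ((if ?P A then real (card A) * weight b g l E A else 0) * (if ?Q B then weight b g l F B else 0))
        + eww b g s t * ((if ?P A then weight b g l E A else 0) * (if ?Q B then real (card B) * weight b g l F B else 0)))"
    apply (rule sum.cong, simp, rule sum.cong, simp)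
    subgoal for A B using join_weight[OF sV sW d x y, of A B b g l] cardU[of A B] by (auto simp: algebra_simps)
    done
  also have "\<dots> = eww b g s t * ((\<Sum>A\<in>Pow V. if ?P A then real (card A) * weight b g l E A else 0) * (\<Sum>B\<in>Pow W. if ?Q B then weight b g l F B else 0))
     + eww b g s t * ((\<Sum>A\<in>Pow V. if ?P A then weight b g l E A else 0) * (\<Sum>B\<in>Pow W. if ?Q B then real (card B) * weight b g l F B else 0))"
    by (subst sum_product, subst sum_product) (simp add: sum_distrib_left sum.distrib)
  also have "\<dots> = eww b g s t * (NN b g l V E ?P * ZZ b g l W F ?Q + ZZ b g l V E ?P * NN b g l W F ?Q)"
    unfolding ZZ_def NN_def by (simp add: algebra_simps)
  finally show "NN b g l (V \<union> W) ?C (\<lambda>S. ?P S \<and> ?Q S) = eww b g s t * (NN b g l V E ?P * ZZ b g l W F ?Q + ZZ b g l V E ?P * NN b g l W F ?Q)" .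
qed

lemma ZZ_split: "ZZ b g l V E P = ZZ b g l V E (\<lambda>S. P S \<and> Q S) + ZZ b g l V E (\<lambda>S. P S \<and> \<not> Q S)"
  unfolding ZZ_def sum.distrib[symmetric] by (rule sum.cong) auto
lemma NN_split: "NN b g l V E P = NN b g l V E (\<lambda>S. P S \<and> Q S) + NN b g l V E (\<lambda>S. P S \<and> \<not> Q S)"
  unfolding NN_def sum.distrib[symmetric] by (rule sum.cong) auto

lemma ZZ_cong: "(\<And>S. S \<subseteq> V \<Longrightarrow> P S = Q S) \<Longrightarrow> ZZ b g l V E P = ZZ b g l V E Q"
  unfolding ZZ_def by (rule sum.cong) auto
lemma NN_cong: "(\<And>S. S \<subseteq> V \<Longrightarrow> P S = Q S) \<Longrightarrow> NN b g l V E P = NN b g l V E Q"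
  unfolding NN_def by (rule sum.cong) auto

lemma join_left:
  assumes sV: "simple_graph V E" and sW: "simple_graph W F" and d: "V \<inter> W = {}"
    and x: "x \<in> V" and y: "y \<in> W"
  defines "C \<equiv> insert {x,y} (E \<union> F)"
  shows "ZZ b g l (V \<union> W) C (\<lambda>S. x \<in> S) = (g * ZZ b g l W F (\<lambda>B. y \<in> B) + ZZ b g l W F (\<lambda>B. y \<notin> B)) * ZZ b g l V E (\<lambda>A. x \<in> A)"
    and "ZZ b g l (V \<union> W) C (\<lambda>S. x \<notin> S) = (ZZ b g l W F (\<lambda>B. y \<in> B) + b * ZZ b g l W F (\<lambda>B. y \<notin> B)) * ZZ b g l V E (\<lambda>A. x \<notin> A)"
    and "NN b g l (V \<union> W) C (\<lambda>S. x \<in> S) = g * (NN b g l V E (\<lambda>A. x \<in> A) * ZZ b g l W F (\<lambda>B. y \<in> B) + ZZ b g l V E (\<lambda>A. x \<in> A) * NN b g l W F (\<lambda>B. y \<in> B))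
        + (NN b g l V E (\<lambda>A. x \<in> A) * ZZ b g l W F (\<lambda>B. y \<notin> B) + ZZ b g l V E (\<lambda>A. x \<in> A) * NN b g l W F (\<lambda>B. y \<notin> B))"
    and "NN b g l (V \<union> W) C (\<lambda>S. x \<notin> S) = (NN b g l V E (\<lambda>A. x \<notin> A) * ZZ b g l W F (\<lambda>B. y \<in> B) + ZZ b g l V E (\<lambda>A. x \<notin> A) * NN b g l W F (\<lambda>B. y \<in> B))
        + b * (NN b g l V E (\<lambda>A. x \<notin> A) * ZZ b g l W F (\<lambda>B. y \<notin> B) + ZZ b g l V E (\<lambda>A. x \<notin> A) * NN b g l W F (\<lambda>B. y \<notin> B))"
proof -
  note J = join_sums[OF sV sW d x y, where b=b and g=g and l=l, folded C_def]
  note JTT = J[where s=True and t=True, simplified] and JTF = J[where s=True and t=False, simplified]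
    and JFT = J[where s=False and t=True, simplified] and JFF = J[where s=False and t=False, simplified]
  have s1: "ZZ b g l (V \<union> W) C (\<lambda>S. x \<in> S) = ZZ b g l (V \<union> W) C (\<lambda>S. x \<in> S \<and> y \<in> S) + ZZ b g l (V \<union> W) C (\<lambda>S. x \<in> S \<and> y \<notin> S)"
    by (rule ZZ_split)
  have s2: "ZZ b g l (V \<union> W) C (\<lambda>S. x \<notin> S) = ZZ b g l (V \<union> W) C (\<lambda>S. x \<notin> S \<and> y \<in> S) + ZZ b g l (V \<union> W) C (\<lambda>S. x \<notin> S \<and> y \<notin> S)"
    by (rule ZZ_split)
  have s3: "NN b g l (V \<union> W) C (\<lambda>S. x \<in> S) = NN b g l (V \<union> W) C (\<lambda>S. x \<in> S \<and> y \<in> S) + NN b g l (V \<union> W) C (\<lambda>S. x \<in> S \<and> y \<notin> S)"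
    by (rule NN_split)
  have s4: "NN b g l (V \<union> W) C (\<lambda>S. x \<notin> S) = NN b g l (V \<union> W) C (\<lambda>S. x \<notin> S \<and> y \<in> S) + NN b g l (V \<union> W) C (\<lambda>S. x \<notin> S \<and> y \<notin> S)"
    by (rule NN_split)
  show "ZZ b g l (V \<union> W) C (\<lambda>S. x \<in> S) = (g * ZZ b g l W F (\<lambda>B. y \<in> B) + ZZ b g l W F (\<lambda>B. y \<notin> B)) * ZZ b g l V E (\<lambda>A. x \<in> A)"
    unfolding s1 JTT JTF by (simp add: eww_def algebra_simps)
  show "ZZ b g l (V \<union> W) C (\<lambda>S. x \<notin> S) = (ZZ b g l W F (\<lambda>B. y \<in> B) + b * ZZ b g l W F (\<lambda>B. y \<notin> B)) * ZZ b g l V E (\<lambda>A. x \<notin> A)"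
    unfolding s2 JFT JFF by (simp add: eww_def algebra_simps)
  show "NN b g l (V \<union> W) C (\<lambda>S. x \<in> S) = g * (NN b g l V E (\<lambda>A. x \<in> A) * ZZ b g l W F (\<lambda>B. y \<in> B) + ZZ b g l V E (\<lambda>A. x \<in> A) * NN b g l W F (\<lambda>B. y \<in> B))
        + (NN b g l V E (\<lambda>A. x \<in> A) * ZZ b g l W F (\<lambda>B. y \<notin> B) + ZZ b g l V E (\<lambda>A. x \<in> A) * NN b g l W F (\<lambda>B. y \<notin> B))"
    unfolding s3 JTT JTF by (simp add: eww_def)
  show "NN b g l (V \<union> W) C (\<lambda>S. x \<notin> S) = (NN b g l V E (\<lambda>A. x \<notin> A) * ZZ b g l W F (\<lambda>B. y \<in> B) + ZZ b g l V E (\<lambda>A. x \<notin> A) * NN b g l W F (\<lambda>B. y \<in> B))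
        + b * (NN b g l V E (\<lambda>A. x \<notin> A) * ZZ b g l W F (\<lambda>B. y \<notin> B) + ZZ b g l V E (\<lambda>A. x \<notin> A) * NN b g l W F (\<lambda>B. y \<notin> B))"
    unfolding s4 JFT JFF by (simp add: eww_def)
qed

lemma join_right:
  assumes sV: "simple_graph V E" and sW: "simple_graph W F" and d: "V \<inter> W = {}"
    and x: "x \<in> V" and y: "y \<in> W"
  defines "C \<equiv> insert {x,y} (E \<union> F)"
  shows "ZZ b g l (V \<union> W) C (\<lambda>S. y \<in> S) = g * ZZ b g l V E (\<lambda>A. x \<in> A) * ZZ b g l W F (\<lambda>B. y \<in> B) + ZZ b g l V E (\<lambda>A. x \<notin> A) * ZZ b g l W F (\<lambda>B. y \<in> B)"
    and "ZZ b g l (V \<union> W) C (\<lambda>S. y \<notin> S) = ZZ b g l V E (\<lambda>A. x \<in> A) * ZZ b g l W F (\<lambda>B. y \<notin> B) + b * ZZ b g l V E (\<lambda>A. x \<notin> A) * ZZ b g l W F (\<lambda>B. y \<notin> B)"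
    and "NN b g l (V \<union> W) C (\<lambda>S. y \<in> S) = g * (NN b g l V E (\<lambda>A. x \<in> A) * ZZ b g l W F (\<lambda>B. y \<in> B) + ZZ b g l V E (\<lambda>A. x \<in> A) * NN b g l W F (\<lambda>B. y \<in> B))
        + (NN b g l V E (\<lambda>A. x \<notin> A) * ZZ b g l W F (\<lambda>B. y \<in> B) + ZZ b g l V E (\<lambda>A. x \<notin> A) * NN b g l W F (\<lambda>B. y \<in> B))"
    and "NN b g l (V \<union> W) C (\<lambda>S. y \<notin> S) = (NN b g l V E (\<lambda>A. x \<in> A) * ZZ b g l W F (\<lambda>B. y \<notin> B) + ZZ b g l V E (\<lambda>A. x \<in> A) * NN b g l W F (\<lambda>B. y \<notin> B))
        + b * (NN b g l V E (\<lambda>A. x \<notin> A) * ZZ b g l W F (\<lambda>B. y \<notin> B) + ZZ b g l V E (\<lambda>A. x \<notin> A) * NN b g l W F (\<lambda>B. y \<notin> B))"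
proof -
  note J = join_sums[OF sV sW d x y, where b=b and g=g and l=l, folded C_def]
  note JTT = J[where s=True and t=True, simplified] and JTF = J[where s=True and t=False, simplified]
    and JFT = J[where s=False and t=True, simplified] and JFF = J[where s=False and t=False, simplified]
  have e1: "ZZ b g l (V \<union> W) C (\<lambda>S. y \<in> S) = ZZ b g l (V \<union> W) C (\<lambda>S. x \<in> S \<and> y \<in> S) + ZZ b g l (V \<union> W) C (\<lambda>S. x \<notin> S \<and> y \<in> S)"
    by (subst ZZ_split[where Q="\<lambda>S. x \<in> S"]) (simp add: conj_commute)
  have e2: "ZZ b g l (V \<union> W) C (\<lambda>S. y \<notin> S) = ZZ b g l (V \<union> W) C (\<lambda>S. x \<in> S \<and> y \<notin> S) + ZZ b g l (V \<union> W) C (\<lambda>S. x \<notin> S \<and> y \<notin> S)"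
    by (subst ZZ_split[where Q="\<lambda>S. x \<in> S"]) (simp add: conj_commute)
  have e3: "NN b g l (V \<union> W) C (\<lambda>S. y \<in> S) = NN b g l (V \<union> W) C (\<lambda>S. x \<in> S \<and> y \<in> S) + NN b g l (V \<union> W) C (\<lambda>S. x \<notin> S \<and> y \<in> S)"
    by (subst NN_split[where Q="\<lambda>S. x \<in> S"]) (simp add: conj_commute)
  have e4: "NN b g l (V \<union> W) C (\<lambda>S. y \<notin> S) = NN b g l (V \<union> W) C (\<lambda>S. x \<in> S \<and> y \<notin> S) + NN b g l (V \<union> W) C (\<lambda>S. x \<notin> S \<and> y \<notin> S)"
    by (subst NN_split[where Q="\<lambda>S. x \<in> S"]) (simp add: conj_commute)
  show "ZZ b g l (V \<union> W) C (\<lambda>S. y \<in> S) = g * ZZ b g l V E (\<lambda>A. x \<in> A) * ZZ b g l W F (\<lambda>B. y \<in> B) + ZZ b g l V E (\<lambda>A. x \<notin> A) * ZZ b g l W F (\<lambda>B. y \<in> B)"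
    unfolding e1 JTT JFT by (simp add: eww_def)
  show "ZZ b g l (V \<union> W) C (\<lambda>S. y \<notin> S) = ZZ b g l V E (\<lambda>A. x \<in> A) * ZZ b g l W F (\<lambda>B. y \<notin> B) + b * ZZ b g l V E (\<lambda>A. x \<notin> A) * ZZ b g l W F (\<lambda>B. y \<notin> B)"
    unfolding e2 JTF JFF by (simp add: eww_def)
  show "NN b g l (V \<union> W) C (\<lambda>S. y \<in> S) = g * (NN b g l V E (\<lambda>A. x \<in> A) * ZZ b g l W F (\<lambda>B. y \<in> B) + ZZ b g l V E (\<lambda>A. x \<in> A) * NN b g l W F (\<lambda>B. y \<in> B))
        + (NN b g l V E (\<lambda>A. x \<notin> A) * ZZ b g l W F (\<lambda>B. y \<in> B) + ZZ b g l V E (\<lambda>A. x \<notin> A) * NN b g l W F (\<lambda>B. y \<in> B))"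
    unfolding e3 JTT JFT by (simp add: eww_def)
  show "NN b g l (V \<union> W) C (\<lambda>S. y \<notin> S) = (NN b g l V E (\<lambda>A. x \<in> A) * ZZ b g l W F (\<lambda>B. y \<notin> B) + ZZ b g l V E (\<lambda>A. x \<in> A) * NN b g l W F (\<lambda>B. y \<notin> B))
        + b * (NN b g l V E (\<lambda>A. x \<notin> A) * ZZ b g l W F (\<lambda>B. y \<notin> B) + ZZ b g l V E (\<lambda>A. x \<notin> A) * NN b g l W F (\<lambda>B. y \<notin> B))"
    unfolding e4 JTF JFF by (simp add: eww_def)
qed

lemma lin_step:
  fixes Z1 Z0 N1 N0 Y1 Y0 M1 M0 a11 a10 a01 a00 b11 b10 b01 b00 P1 P0 Q1 Q0 NP1 NP0 NQ1 NQ0 :: real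
  assumes pos: "Z1 > 0" "Z0 > 0" "Y1 > 0" "Y0 > 0" "P1 > 0" "P0 > 0"
    and P1: "P1 = a11*Z1 + a10*Z0" and P0: "P0 = a01*Z1 + a00*Z0"
    and Q1: "Q1 = a11*Y1 + a10*Y0" and Q0: "Q0 = a01*Y1 + a00*Y0"
    and NP1: "NP1 = a11*N1 + a10*N0 + b11*Z1 + b10*Z0" and NP0: "NP0 = a01*N1 + a00*N0 + b01*Z1 + b00*Z0"
    and NQ1: "NQ1 = a11*M1 + a10*M0 + b11*Y1 + b10*Y0" and NQ0: "NQ0 = a01*M1 + a00*M0 + b01*Y1 + b00*Y0"
    and D: "a11*a00 \<noteq> a01*a10"
    and prp: "Z1*Y0 = Y1*Z0"
    and dif: "N1/Z1 - N0/Z0 \<noteq> M1/Y1 - M0/Y0"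
  shows "P1*Q0 = Q1*P0" and "NP1/P1 - NP0/P0 \<noteq> NQ1/Q1 - NQ0/Q0"
proof -
  define k where "k = Y1/Z1"
  have k: "k > 0" using pos k_def by simp
  have Y1: "Y1 = k*Z1" using pos k_def by simp
  have "Z1*Y0 = Z1*(k*Z0)" using prp Y1 by (simp add: algebra_simps)
  then have Y0: "Y0 = k*Z0" using pos by simp
  have Q1k: "Q1 = k*P1" using Q1 P1 Y1 Y0 by (simp add: algebra_simps)
  have Q0k: "Q0 = k*P0" using Q0 P0 Y1 Y0 by (simp add: algebra_simps)
  show "P1*Q0 = Q1*P0" using Q1k Q0k by simp
  define e1 e0 d1 d0 where "e1 = N1/Z1" "e0 = N0/Z0" "d1 = M1/Y1" "d0 = M0/Y0"
  have N1: "N1 = Z1*e1" and N0: "N0 = Z0*e0" and M1: "M1 = k*Z1*d1" and M0: "M0 = k*Z0*d0"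
    using pos Y1 Y0 k by (simp_all add: e1_e0_d1_d0_def)
  have f1: "NP1/P1 - NQ1/Q1 = (a11*Z1*(e1-d1) + a10*Z0*(e0-d0))/P1"
  proof -
    have "NQ1 = k*(a11*Z1*d1 + a10*Z0*d0 + b11*Z1 + b10*Z0)" using NQ1 M1 M0 Y1 Y0 by (simp add: algebra_simps)
    then have "NQ1/Q1 = (a11*Z1*d1 + a10*Z0*d0 + b11*Z1 + b10*Z0)/P1" using Q1k k by simp
    moreover have "NP1 = a11*Z1*e1 + a10*Z0*e0 + b11*Z1 + b10*Z0" using NP1 N1 N0 by (simp add: algebra_simps)
    ultimately show ?thesis by (simp add: diff_divide_distrib[symmetric] algebra_simps)
  qed
  have f0: "NP0/P0 - NQ0/Q0 = (a01*Z1*(e1-d1) + a00*Z0*(e0-d0))/P0"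
  proof -
    have "NQ0 = k*(a01*Z1*d1 + a00*Z0*d0 + b01*Z1 + b00*Z0)" using NQ0 M1 M0 Y1 Y0 by (simp add: algebra_simps)
    then have "NQ0/Q0 = (a01*Z1*d1 + a00*Z0*d0 + b01*Z1 + b00*Z0)/P0" using Q0k k by simp
    moreover have "NP0 = a01*Z1*e1 + a00*Z0*e0 + b01*Z1 + b00*Z0" using NP0 N1 N0 by (simp add: algebra_simps)
    ultimately show ?thesis by (simp add: diff_divide_distrib[symmetric] algebra_simps)
  qed
  have key: "(NP1/P1 - NP0/P0) - (NQ1/Q1 - NQ0/Q0) = Z1*Z0*(a11*a00 - a01*a10)*((e1-d1)-(e0-d0))/(P1*P0)"
  proof -
    have "(NP1/P1 - NP0/P0) - (NQ1/Q1 - NQ0/Q0) = (NP1/P1 - NQ1/Q1) - (NP0/P0 - NQ0/Q0)" by simp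
    also have "\<dots> = (a11*Z1*(e1-d1) + a10*Z0*(e0-d0))/P1 - (a01*Z1*(e1-d1) + a00*Z0*(e0-d0))/P0"
      unfolding f1 f0 ..
    also have "\<dots> = ((a11*Z1*(e1-d1) + a10*Z0*(e0-d0))*P0 - (a01*Z1*(e1-d1) + a00*Z0*(e0-d0))*P1)/(P1*P0)"
      using pos by (simp add: field_simps)
    also have "(a11*Z1*(e1-d1) + a10*Z0*(e0-d0))*P0 - (a01*Z1*(e1-d1) + a00*Z0*(e0-d0))*P1
        = Z1*Z0*(a11*a00 - a01*a10)*((e1-d1)-(e0-d0))"
      unfolding P1 P0 by (simp add: algebra_simps)
    finally show ?thesis .
  qed
  have "(e1-d1)-(e0-d0) \<noteq> 0" using dif unfolding e1_e0_d1_d0_def by simp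
  then have "Z1*Z0*(a11*a00 - a01*a10)*((e1-d1)-(e0-d0))/(P1*P0) \<noteq> 0" using pos D by simp
  then show "NP1/P1 - NP0/P0 \<noteq> NQ1/Q1 - NQ0/Q0" using key by linarith
qed

definition fr :: "nat set \<Rightarrow> nat \<Rightarrow> nat" where "fr V k = Suc (Max (insert 0 V) + k)"

lemma fr_notin: "finite V \<Longrightarrow> fr V k \<notin> V"
proof
  assume f: "finite V" and "fr V k \<in> V"
  then have "fr V k \<le> Max (insert 0 V)" by simp
  then show False unfolding fr_def by simp
qed

lemma fr_inj[simp]: "fr V i = fr V j \<longleftrightarrow> i = j" unfolding fr_def by simp

definition good :: "rgraph \<Rightarrow> bool" where
  "good T = (case T of (V,E,r) \<Rightarrow> simple_graph V E \<and> r \<in> V)"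
definition Z1 where "Z1 b g l T = (case T of (V,E,r) \<Rightarrow> ZZ b g l V E (\<lambda>S. r \<in> S))"
definition Z0 where "Z0 b g l T = (case T of (V,E,r) \<Rightarrow> ZZ b g l V E (\<lambda>S. r \<notin> S))"
definition N1 where "N1 b g l T = (case T of (V,E,r) \<Rightarrow> NN b g l V E (\<lambda>S. r \<in> S))"
definition N0 where "N0 b g l T = (case T of (V,E,r) \<Rightarrow> NN b g l V E (\<lambda>S. r \<notin> S))"

definition gext :: "rgraph \<Rightarrow> rgraph" where
  "gext T = (case T of (V,E,r) \<Rightarrow> (insert (fr V 0) V, insert {r, fr V 0} E, fr V 0))"
definition sibl :: "rgraph \<Rightarrow> rgraph" where
  "sibl T = (case T of (V,E,r) \<Rightarrow> (insert (fr V 0) V, insert {r, fr V 0} E, r))"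
definition tri :: "nat \<Rightarrow> nat \<Rightarrow> nat \<Rightarrow> nat set set" where
  "tri u p q = {{u,p},{u,q},{p,q}}"
definition sibt :: "rgraph \<Rightarrow> rgraph" where
  "sibt T = (case T of (V,E,r) \<Rightarrow> (V \<union> {fr V 0, fr V 1, fr V 2}, insert {r, fr V 0} (E \<union> tri (fr V 0) (fr V 1) (fr V 2)), r))"

lemma weight_nonneg: "b \<ge> 0 \<Longrightarrow> g \<ge> 0 \<Longrightarrow> l > 0 \<Longrightarrow> weight b g l E S \<ge> 0"
  unfolding weight_def by simp

lemma ZZ_nonneg: "b \<ge> 0 \<Longrightarrow> g \<ge> 0 \<Longrightarrow> l > 0 \<Longrightarrow> ZZ b g l V E P \<ge> 0"
  unfolding ZZ_def by (intro sum_nonneg) (simp add: weight_nonneg)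

lemma ZZ_pos:
  assumes ab: "antiferromagnetic b g" and l: "l > 0" and s: "simple_graph V E" and r: "r \<in> V"
  shows "ZZ b g l V E (\<lambda>S. r \<in> S) > 0" and "ZZ b g l V E (\<lambda>S. r \<notin> S) > 0"
proof -
  have b0: "b \<ge> 0" and g0: "g \<ge> 0" and bg: "b \<noteq> 0 \<or> g \<noteq> 0" using ab unfolding antiferromagnetic_def by auto
  have fV: "finite V" and EV: "\<forall>e\<in>E. e \<subseteq> V \<and> card e = 2" using s unfolding simple_graph_def by auto
  have card2: "\<And>e. e \<in> E \<Longrightarrow> \<not> e \<subseteq> {r}"
  proof
    fix e assume "e \<in> E" "e \<subseteq> {r}"
    then have "card e \<le> 1" using card_mono[of "{r}" e] by simp
    then show False using EV \<open>e \<in> E\<close> by auto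
  qed
  have ne: "\<And>e. e \<in> E \<Longrightarrow> e \<noteq> {}" using card2 by blast
  have nn: "\<And>S. 0 \<le> weight b g l E S" using weight_nonneg[OF b0 g0 l] by simp
  have "ZZ b g l V E (\<lambda>S. r \<in> S) > 0 \<and> ZZ b g l V E (\<lambda>S. r \<notin> S) > 0"
  proof (cases "g > 0")
    case True
    have "\<forall>e\<in>E. e \<inter> V = e" using EV by auto
    then have h: "{e \<in> E. e \<inter> V = {}} = {}" using ne by auto
    have m0V: "m0 E V = 0" unfolding m0_def h by simp
    have m0V': "m0 E (V - {r}) = 0"
    proof -
      have h: "{e \<in> E. e \<inter> (V - {r}) = {}} = {}"
      proof (rule ccontr)
        assume "{e \<in> E. e \<inter> (V - {r}) = {}} \<noteq> {}"
        then obtain e where "e \<in> E" "e \<inter> (V - {r}) = {}" by auto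
        then have "e \<subseteq> {r}" using EV by auto
        then show False using card2 \<open>e \<in> E\<close> by auto
      qed
      show ?thesis unfolding m0_def h by simp
    qed
    have p1: "0 < (if r \<in> V then weight b g l E V else 0)" using r True l unfolding weight_def m0V by simp
    have p0: "0 < (if r \<notin> V - {r} then weight b g l E (V - {r}) else 0)" using True l unfolding weight_def m0V' by simp
    have "0 < (\<Sum>S\<in>Pow V. if r \<in> S then weight b g l E S else 0)"
      by (rule sum_pos2[where i=V]) (use fV p1 nn in auto)
    moreover have "0 < (\<Sum>S\<in>Pow V. if r \<notin> S then weight b g l E S else 0)"
      by (rule sum_pos2[where i="V - {r}"]) (use fV p0 nn in auto)
    ultimately show ?thesis unfolding ZZ_def by simp
  next
    case False
    then have g: "g = 0" and bp: "b > 0" using g0 b0 bg by auto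
    have m1r: "m1 E {r} = 0" unfolding m1_def using card2 by auto
    have m1e: "m1 E {} = 0" unfolding m1_def using ne by auto
    have p1: "0 < (if r \<in> {r} then weight b g l E {r} else 0)" using bp l unfolding weight_def m1r by simp
    have p0: "0 < (if r \<notin> {} then weight b g l E {} else 0)" using bp unfolding weight_def m1e by simp
    have "0 < (\<Sum>S\<in>Pow V. if r \<in> S then weight b g l E S else 0)"
      by (rule sum_pos2[where i="{r}"]) (use fV p1 nn r in auto)
    moreover have "0 < (\<Sum>S\<in>Pow V. if r \<notin> S then weight b g l E S else 0)"
      by (rule sum_pos2[where i="{}"]) (use fV p0 nn in auto)
    ultimately show ?thesis unfolding ZZ_def by simp
  qed
  then show "ZZ b g l V E (\<lambda>S. r \<in> S) > 0" and "ZZ b g l V E (\<lambda>S. r \<notin> S) > 0" by auto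
qed

lemma single_sums:
  "ZZ b g l {n} {} (\<lambda>B. n \<in> B) = l" "ZZ b g l {n} {} (\<lambda>B. n \<notin> B) = 1"
  "NN b g l {n} {} (\<lambda>B. n \<in> B) = l" "NN b g l {n} {} (\<lambda>B. n \<notin> B) = 0"
proof -
  have P: "Pow {n} = {{},{n}}" by auto
  show "ZZ b g l {n} {} (\<lambda>B. n \<in> B) = l" "ZZ b g l {n} {} (\<lambda>B. n \<notin> B) = 1"
    "NN b g l {n} {} (\<lambda>B. n \<in> B) = l" "NN b g l {n} {} (\<lambda>B. n \<notin> B) = 0"
    unfolding ZZ_def NN_def weight_def m0_def m1_def P by simp_all
qed

lemma single_simple: "simple_graph {n} {}" unfolding simple_graph_def by simp

definition lin_op where
  "lin_op b g l op a11 a10 a01 a00 b11 b10 b01 b00 \<longleftrightarrow> (\<forall>T. good T \<longrightarrow> good (op T) \<and>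
     Z1 b g l (op T) = a11 * Z1 b g l T + a10 * Z0 b g l T \<and>
     Z0 b g l (op T) = a01 * Z1 b g l T + a00 * Z0 b g l T \<and>
     N1 b g l (op T) = a11 * N1 b g l T + a10 * N0 b g l T + b11 * Z1 b g l T + b10 * Z0 b g l T \<and>
     N0 b g l (op T) = a01 * N1 b g l T + a00 * N0 b g l T + b01 * Z1 b g l T + b00 * Z0 b g l T)"

definition pairok where
  "pairok b g l T T' \<longleftrightarrow> Z1 b g l T * Z0 b g l T' = Z1 b g l T' * Z0 b g l T \<and>
     N1 b g l T / Z1 b g l T - N0 b g l T / Z0 b g l T \<noteq> N1 b g l T' / Z1 b g l T' - N0 b g l T' / Z0 b g l T'"

lemma Z_pos:
  assumes "antiferromagnetic b g" "l > 0" "good T"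
  shows "Z1 b g l T > 0" "Z0 b g l T > 0"
  using assms ZZ_pos[OF assms(1,2)] unfolding good_def Z1_def Z0_def by (auto split: prod.splits)

lemma lin_op_pair:
  assumes af: "antiferromagnetic b g" and l: "l > 0"
    and op: "lin_op b g l op a11 a10 a01 a00 b11 b10 b01 b00" and D: "a11*a00 \<noteq> a01*a10"
    and T: "good T" and T': "good T'" and p: "pairok b g l T T'"
  shows "pairok b g l (op T) (op T')" and "good (op T)" and "good (op T')"
proof -
  note o1 = op[unfolded lin_op_def, rule_format, OF T] and o2 = op[unfolded lin_op_def, rule_format, OF T']
  show g1: "good (op T)" and g2: "good (op T')" using o1 o2 by auto
  note ps = Z_pos[OF af l T] Z_pos[OF af l T'] Z_pos[OF af l g1] Z_pos[OF af l g2]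
  show "pairok b g l (op T) (op T')"
    unfolding pairok_def
    using lin_step[OF ps(1-4) ps(5-6), of a11 a10 a01 a00 "Z1 b g l (op T')" "Z0 b g l (op T')"
        "N1 b g l (op T)" "N1 b g l T" "N0 b g l T" b11 b10 "N0 b g l (op T)" b01 b00
        "N1 b g l (op T')" "N1 b g l T'" "N0 b g l T'" "N0 b g l (op T')"] o1 o2 D p ps(7-8)
    unfolding pairok_def by auto
qed

lemma simple_ext:
  assumes s: "simple_graph V E" and r: "r \<in> V" and n: "n \<notin> V"
  shows "simple_graph (insert n V) (insert {r,n} E)"
  using s r n unfolding simple_graph_def by (auto simp: card_insert_if)

lemma ext_lin: "lin_op b g l gext (g*l) l 1 b (g*l) l 0 0"
  unfolding lin_op_def
proof (intro allI impI)
  fix T assume gT: "good T"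
  obtain V E r where T: "T = (V,E,r)" by (cases T) auto
  have s: "simple_graph V E" and r: "r \<in> V" using gT T unfolding good_def by auto
  have fV: "finite V" using s unfolding simple_graph_def by auto
  define n where "n = fr V 0"
  have n: "n \<notin> V" using fr_notin[OF fV] n_def by simp
  have eT: "gext T = (insert n V, insert {r,n} E, n)" unfolding gext_def T n_def by simp
  have d: "V \<inter> {n} = {}" using n by auto
  note J = join_right[OF s single_simple d r singletonI, where b=b and g=g and l=l, unfolded single_sums]
  have V: "V \<union> {n} = insert n V" and Ee: "insert {r,n} (E \<union> {}) = insert {r,n} E" by auto
  note J' = J[unfolded V Ee]
  show "good (gext T) \<and>
     Z1 b g l (gext T) = g * l * Z1 b g l T + l * Z0 b g l T \<and>
     Z0 b g l (gext T) = 1 * Z1 b g l T + b * Z0 b g l T \<and>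
     N1 b g l (gext T) = g * l * N1 b g l T + l * N0 b g l T + g * l * Z1 b g l T + l * Z0 b g l T \<and>
     N0 b g l (gext T) = 1 * N1 b g l T + b * N0 b g l T + 0 * Z1 b g l T + 0 * Z0 b g l T"
    unfolding eT using J' simple_ext[OF s r n] T
    by (simp add: good_def Z1_def Z0_def N1_def N0_def algebra_simps)
qed

lemma sibl_lin: "lin_op b g l sibl (g*l+1) 0 0 (l+b) (g*l) 0 0 l"
  unfolding lin_op_def
proof (intro allI impI)
  fix T assume gT: "good T"
  obtain V E r where T: "T = (V,E,r)" by (cases T) auto
  have s: "simple_graph V E" and r: "r \<in> V" using gT T unfolding good_def by auto
  have fV: "finite V" using s unfolding simple_graph_def by auto
  define n where "n = fr V 0"
  have n: "n \<notin> V" using fr_notin[OF fV] n_def by simp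
  have eT: "sibl T = (insert n V, insert {r,n} E, r)" unfolding sibl_def T n_def by simp
  have d: "V \<inter> {n} = {}" using n by auto
  note J = join_left[OF s single_simple d r singletonI, where b=b and g=g and l=l, unfolded single_sums]
  have V: "V \<union> {n} = insert n V" and Ee: "insert {r,n} (E \<union> {}) = insert {r,n} E" by auto
  note J' = J[unfolded V Ee]
  show "good (sibl T) \<and>
     Z1 b g l (sibl T) = (g * l + 1) * Z1 b g l T + 0 * Z0 b g l T \<and>
     Z0 b g l (sibl T) = 0 * Z1 b g l T + (l + b) * Z0 b g l T \<and>
     N1 b g l (sibl T) = (g * l + 1) * N1 b g l T + 0 * N0 b g l T + g * l * Z1 b g l T + 0 * Z0 b g l T \<and>
     N0 b g l (sibl T) = 0 * N1 b g l T + (l + b) * N0 b g l T + 0 * Z1 b g l T + l * Z0 b g l T"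
    unfolding eT using J' simple_ext[OF s r n] T r
    by (simp add: good_def Z1_def Z0_def N1_def N0_def algebra_simps)
qed

lemma sum_Pow_insert:
  assumes "finite A" "a \<notin> A"
  shows "sum f (Pow (insert a A)) = sum f (Pow A) + sum (\<lambda>S. f (insert a S)) (Pow A)"
proof -
  have d: "Pow A \<inter> insert a ` Pow A = {}" using assms by auto
  have i: "inj_on (insert a) (Pow A)" using assms unfolding inj_on_def by (meson PowD insert_ident subsetD)
  have "sum f (Pow (insert a A)) = sum f (Pow A \<union> insert a ` Pow A)" by (simp add: Pow_insert)
  also have "\<dots> = sum f (Pow A) + sum f (insert a ` Pow A)" using d assms by (simp add: sum.union_disjoint)
  also have "sum f (insert a ` Pow A) = sum (\<lambda>S. f (insert a S)) (Pow A)" using sum.reindex[OF i] by simp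
  finally show ?thesis .
qed

lemma sum_Pow3:
  assumes "u \<noteq> p" "u \<noteq> q" "p \<noteq> q"
  shows "sum f (Pow {u,p,q}) = f {} + f {q} + f {p} + f {p,q} + f {u} + f {u,q} + f {u,p} + f {u,p,q}"
  using assms by (simp add: sum_Pow_insert add.assoc)

lemma tri_simple: "u \<noteq> p \<Longrightarrow> u \<noteq> q \<Longrightarrow> p \<noteq> q \<Longrightarrow> simple_graph {u,p,q} (tri u p q)"
  unfolding simple_graph_def tri_def by auto

lemma tri_weight:
  assumes "u \<noteq> p" "u \<noteq> q" "p \<noteq> q"
  shows "weight b g l (tri u p q) S = l ^ card S * (ew b g S {u,p} * ew b g S {u,q} * ew b g S {p,q})"
proof -
  have "{u,p} \<notin> {{u,q},{p,q}}" "{u,q} \<notin> {{p,q}}" using assms by (auto simp: doubleton_eq_iff)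
  then show ?thesis using weight_prod[OF tri_simple[OF assms]] unfolding tri_def by (simp add: mult.assoc)
qed

lemma tri_sums:
  assumes "u \<noteq> p" "u \<noteq> q" "p \<noteq> q"
  shows "ZZ b g l {u,p,q} (tri u p q) (\<lambda>B. u \<in> B) = l * (l^2*g^3 + 2*l*g + b)"
    and "ZZ b g l {u,p,q} (tri u p q) (\<lambda>B. u \<notin> B) = l^2*g + 2*l*b + b^3"
  using assms unfolding ZZ_def
  by (simp_all add: sum_Pow3 tri_weight ew_def card_insert_if power2_eq_square power3_eq_cube algebra_simps)

lemma tri_nsums:
  assumes "u \<noteq> p" "u \<noteq> q" "p \<noteq> q"
  shows "NN b g l {u,p,q} (tri u p q) (\<lambda>B. u \<in> B) = l*b + 4*l^2*g + 3*l^3*g^3"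
    and "NN b g l {u,p,q} (tri u p q) (\<lambda>B. u \<notin> B) = 2*l*b + 2*l^2*g"
  using assms unfolding NN_def
  by (simp_all add: sum_Pow3 tri_weight ew_def card_insert_if power2_eq_square power3_eq_cube algebra_simps)

definition "K1t b g l = l * (l^2*g^3 + 2*l*g + b)"
definition "K0t b g l = l^2*g + 2*l*b + b^3"
definition "KN1t b g l = l*b + 4*l^2*g + 3*l^3*g^3"
definition "KN0t b g l = 2*l*b + 2*l^2*g"

lemma sibt_lin: "lin_op b g l sibt (g*K1t b g l + K0t b g l) 0 0 (K1t b g l + b*K0t b g l)
   (g*KN1t b g l + KN0t b g l) 0 0 (KN1t b g l + b*KN0t b g l)"
  unfolding lin_op_def
proof (intro allI impI)
  fix T assume gT: "good T"
  obtain V E r where T: "T = (V,E,r)" by (cases T) auto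
  have s: "simple_graph V E" and r: "r \<in> V" using gT T unfolding good_def by auto
  have fV: "finite V" using s unfolding simple_graph_def by auto
  define u p q where "u = fr V 0" "p = fr V 1" "q = fr V 2"
  have n: "u \<notin> V" "p \<notin> V" "q \<notin> V" using fr_notin[OF fV] u_p_q_def by auto
  have dd: "u \<noteq> p" "u \<noteq> q" "p \<noteq> q" using u_p_q_def by auto
  have eT: "sibt T = (V \<union> {u,p,q}, insert {r,u} (E \<union> tri u p q), r)" unfolding sibt_def T u_p_q_def by simp
  have d: "V \<inter> {u,p,q} = {}" using n by auto
  note J = join_left[OF s tri_simple[OF dd] d r insertI1, where b=b and g=g and l=l,
      unfolded tri_sums[OF dd] tri_nsums[OF dd]]
  have sC: "simple_graph (V \<union> {u,p,q}) (insert {r,u} (E \<union> tri u p q))"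
    using s tri_simple[OF dd] d r n unfolding simple_graph_def by (auto simp: card_insert_if)
  show "good (sibt T) \<and>
     Z1 b g l (sibt T) = (g*K1t b g l + K0t b g l) * Z1 b g l T + 0 * Z0 b g l T \<and>
     Z0 b g l (sibt T) = 0 * Z1 b g l T + (K1t b g l + b*K0t b g l) * Z0 b g l T \<and>
     N1 b g l (sibt T) = (g*K1t b g l + K0t b g l) * N1 b g l T + 0 * N0 b g l T + (g*KN1t b g l + KN0t b g l) * Z1 b g l T + 0 * Z0 b g l T \<and>
     N0 b g l (sibt T) = 0 * N1 b g l T + (K1t b g l + b*K0t b g l) * N0 b g l T + 0 * Z1 b g l T + (KN1t b g l + b*KN0t b g l) * Z0 b g l T"
    unfolding eT using J sC T r
    by (simp add: good_def Z1_def Z0_def N1_def N0_def K1t_def K0t_def KN1t_def KN0t_def algebra_simps)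
qed

lemma filter_sum: "finite V \<Longrightarrow> (\<Sum>S\<in>{S \<in> Pow V. P S}. h S) = (\<Sum>S\<in>Pow V. if P S then h S else 0)"
  by (metis (no_types) finite_Pow_iff sum.inter_filter)

lemma gadget_vals:
  assumes af: "antiferromagnetic b g" and l: "l > 0" and gT: "good T"
  shows "eff_field b g l T = Z1 b g l T / (l * Z0 b g l T)"
    and "mag_gap b g l T = N1 b g l T / Z1 b g l T - N0 b g l T / Z0 b g l T"
proof -
  obtain V E r where T: "T = (V,E,r)" by (cases T) auto
  have s: "simple_graph V E" and r: "r \<in> V" using gT T unfolding good_def by auto
  have fV: "finite V" using s unfolding simple_graph_def by auto
  have p1: "Z1 b g l T > 0" and p0: "Z0 b g l T > 0" using Z_pos[OF af l gT] by auto
  have Zp: "Zpart b g l V E = Z1 b g l T + Z0 b g l T"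
    unfolding Zpart_def Z1_def Z0_def T ZZ_def by (simp add: sum.distrib[symmetric]) (rule sum.cong, auto)
  have Zpp: "Zpart b g l V E > 0" using Zp p1 p0 by simp
  have gp1: "gibbs_prob b g l V E (\<lambda>S. r \<in> S) = Z1 b g l T / Zpart b g l V E"
    unfolding gibbs_prob_def filter_sum[OF fV] Z1_def T ZZ_def by simp
  have gp0: "gibbs_prob b g l V E (\<lambda>S. r \<notin> S) = Z0 b g l T / Zpart b g l V E"
    unfolding gibbs_prob_def filter_sum[OF fV] Z0_def T ZZ_def by simp
  show "eff_field b g l T = Z1 b g l T / (l * Z0 b g l T)"
  proof -
    have "eff_field b g l T = (1/l) * ((Z1 b g l T / Zpart b g l V E) / (Z0 b g l T / Zpart b g l V E))"
      unfolding eff_field_def using gp1 gp0 by (simp add: T)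
    also have "\<dots> = Z1 b g l T / (l * Z0 b g l T)" using Zpp p0 l by (simp add: field_simps)
    finally show ?thesis .
  qed
  have ce1: "gibbs_cond_exp b g l V E (\<lambda>S. real (card S)) (\<lambda>S. r \<in> S) = N1 b g l T / Z1 b g l T"
  proof -
    have "(\<Sum>S\<in>{S \<in> Pow V. r \<in> S}. real (card S) * (weight b g l E S / Zpart b g l V E)) = N1 b g l T / Zpart b g l V E"
      unfolding N1_def T NN_def filter_sum[OF fV] prod.case sum_divide_distrib by (rule sum.cong) auto
    then show ?thesis unfolding gibbs_cond_exp_def gp1 using Zpp by simp
  qed
  have ce0: "gibbs_cond_exp b g l V E (\<lambda>S. real (card S)) (\<lambda>S. r \<notin> S) = N0 b g l T / Z0 b g l T"
  proof -
    have "(\<Sum>S\<in>{S \<in> Pow V. r \<notin> S}. real (card S) * (weight b g l E S / Zpart b g l V E)) = N0 b g l T / Zpart b g l V E"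
      unfolding N0_def T NN_def filter_sum[OF fV] prod.case sum_divide_distrib by (rule sum.cong) auto
    then show ?thesis unfolding gibbs_cond_exp_def gp0 using Zpp by simp
  qed
  show "mag_gap b g l T = N1 b g l T / Z1 b g l T - N0 b g l T / Z0 b g l T"
    unfolding mag_gap_def T using ce1 ce0 by (simp add: T)
qed

lemma degree_insert: "finite E \<Longrightarrow> degree (insert e E) w = degree E w + (if w \<in> e \<and> e \<notin> E then 1 else 0)"
proof (cases "e \<in> E")
  case True
  then show ?thesis by (simp add: insert_absorb)
next
  case False
  assume f: "finite E"
  show ?thesis unfolding degree_def using card_filter_insert[OF f False, of "\<lambda>x. w \<in> x"] False by simp
qed

lemma degree_union: "finite A \<Longrightarrow> finite B \<Longrightarrow> A \<inter> B = {} \<Longrightarrow> degree (A \<union> B) w = degree A w + degree B w"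
proof -
  assume f: "finite A" "finite B" and d: "A \<inter> B = {}"
  have "{e \<in> A \<union> B. w \<in> e} = {e \<in> A. w \<in> e} \<union> {e \<in> B. w \<in> e}" by auto
  then show ?thesis unfolding degree_def using f d by (simp add: card_Un_disjoint disjoint_iff)
qed

lemma degree_zero: "simple_graph V E \<Longrightarrow> w \<notin> V \<Longrightarrow> degree E w = 0"
  unfolding degree_def simple_graph_def by (auto simp: card_eq_0_iff)
lemma degree_tri:
  assumes "u \<noteq> p" "u \<noteq> q" "p \<noteq> q"
  shows "degree (tri u p q) w = (if w \<in> {u,p,q} then 2 else 0)"
proof -
  have "{e \<in> tri u p q. w \<in> e} = (if w = u then {{u,p},{u,q}} else if w = p then {{u,p},{p,q}} else if w = q then {{u,q},{p,q}} else {})"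
    unfolding tri_def using assms by auto
  then show ?thesis unfolding degree_def using assms by (auto simp: doubleton_eq_iff)
qed

lemma adj_new:
  assumes s: "simple_graph V E" and y: "y \<notin> V" and a: "adj (insert {r,y} E) z y" and r: "r \<noteq> y"
  shows "z = r"
proof -
  have "{z,y} = {r,y} \<or> {z,y} \<in> E" using a unfolding adj_def by auto
  moreover have "{z,y} \<notin> E" using s y unfolding simple_graph_def by auto
  ultimately have "{z,y} = {r,y}" by simp
  then show ?thesis using r by (auto simp: doubleton_eq_iff)
qed

lemma mod_pred_ne_succ:
  fixes i n :: nat
  assumes i: "i < n" and n: "n \<ge> 3"
  shows "(i + n - 1) mod n \<noteq> (i + 1) mod n"
proof (cases "i + 1 < n")
  case True
  then have s: "(i + 1) mod n = i + 1" by (rule mod_less)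
  show ?thesis
  proof (cases "i = 0")
    case True
    have "n - 1 < n" using n by linarith
    then have "(n - 1) mod n = n - 1" by (rule mod_less)
    then have "(i + n - 1) mod n = n - 1" using True by simp
    then show ?thesis using s True n by linarith
  next
    case False
    then have e: "i + n - 1 = (i - 1) + n" by linarith
    have "(i - 1) mod n = i - 1" using i by (intro mod_less) linarith
    then have "(i + n - 1) mod n = i - 1" unfolding e mod_add_self2 .
    then show ?thesis using s by linarith
  qed
next
  case False
  then have ii: "i + 1 = n" using i by linarith
  then have s: "(i + 1) mod n = 0" by simp
  have e: "i + n - 1 = (n - 2) + n" using ii n by linarith
  have "(n - 2) mod n = n - 2" using n by (intro mod_less) linarith
  then have "(i + n - 1) mod n = n - 2" unfolding e mod_add_self2 .
  then show ?thesis using s n by linarith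
qed

lemma tree_pendant:
  assumes t: "is_tree V E" and x: "x \<in> V" and y: "y \<notin> V"
  shows "is_tree (insert y V) (insert {x,y} E)"
proof -
  let ?E = "insert {x,y} E"
  have s: "simple_graph V E" and c: "connected_graph V E" and nc: "\<not> has_cycle V E" using t unfolding is_tree_def by auto
  have xy: "x \<noteq> y" using x y by auto
  have s': "simple_graph (insert y V) ?E" using s x y xy unfolding simple_graph_def by (auto simp: card_insert_if)
  have mono: "\<And>u v. (adj E)\<^sup>*\<^sup>* u v \<Longrightarrow> (adj ?E)\<^sup>*\<^sup>* u v"
  proof -
    fix u v assume "(adj E)\<^sup>*\<^sup>* u v"
    then show "(adj ?E)\<^sup>*\<^sup>* u v"
      by (rule rtranclp_mono[THEN predicate2D, rotated]) (auto simp: adj_def)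
  qed
  have axy: "adj ?E x y" and ayx: "adj ?E y x" unfolding adj_def by (auto simp: insert_commute)
  have c': "connected_graph (insert y V) ?E"
    unfolding connected_graph_def
  proof (intro ballI)
    fix u v assume u: "u \<in> insert y V" and v: "v \<in> insert y V"
    have xu: "\<And>w. w \<in> insert y V \<Longrightarrow> (adj ?E)\<^sup>*\<^sup>* x w"
    proof -
      fix w assume "w \<in> insert y V"
      then show "(adj ?E)\<^sup>*\<^sup>* x w"
      proof
        assume "w = y" then show ?thesis using axy by auto
      next
        assume "w \<in> V" then show ?thesis using c x mono unfolding connected_graph_def by auto
      qed
    qed
    have ux: "\<And>w. w \<in> insert y V \<Longrightarrow> (adj ?E)\<^sup>*\<^sup>* w x"
    proof -
      fix w assume "w \<in> insert y V"
      then show "(adj ?E)\<^sup>*\<^sup>* w x"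
      proof
        assume "w = y" then show ?thesis using ayx by auto
      next
        assume "w \<in> V" then show ?thesis using c x mono unfolding connected_graph_def by auto
      qed
    qed
    show "(adj ?E)\<^sup>*\<^sup>* u v" using ux[OF u] xu[OF v] by (meson rtranclp_trans)
  qed
  have nc': "\<not> has_cycle (insert y V) ?E"
  proof
    assume "has_cycle (insert y V) ?E"
    then obtain xs where len: "length xs \<ge> 3" and dis: "distinct xs" and sub: "set xs \<subseteq> insert y V"
      and ad: "\<forall>i<length xs. adj ?E (xs ! i) (xs ! ((i + 1) mod length xs))"
      unfolding has_cycle_def by blast
    let ?n = "length xs"
    show False
    proof (cases "y \<in> set xs")
      case True
      then obtain i where i: "i < ?n" "xs ! i = y" by (auto simp: in_set_conv_nth)
      define j where "j = (i + ?n - 1) mod ?n"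
      have j: "j < ?n" unfolding j_def using len by (intro mod_less_divisor) linarith
      have ji: "(j + 1) mod ?n = i"
      proof -
        have "(j + 1) mod ?n = ((i + ?n - 1) + 1) mod ?n" unfolding j_def by (simp add: mod_Suc_eq)
        also have "(i + ?n - 1) + 1 = i + ?n" using len by simp
        finally show ?thesis using i by simp
      qed
      have a1: "adj ?E (xs ! j) y" using ad j ji i by metis
      have a2: "adj ?E y (xs ! ((i + 1) mod ?n))" using ad i by metis
      have a2': "adj ?E (xs ! ((i + 1) mod ?n)) y" using a2 unfolding adj_def by (simp add: insert_commute)
      have "xs ! j = x" using adj_new[OF s y a1 xy] .
      moreover have "xs ! ((i + 1) mod ?n) = x" using adj_new[OF s y a2' xy] .
      ultimately have "xs ! j = xs ! ((i + 1) mod ?n)" by simp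
      moreover have m: "(i + 1) mod ?n < ?n" using len by (intro mod_less_divisor) linarith
      ultimately have "j = (i + 1) mod ?n" using nth_eq_iff_index_eq[OF dis j m] by simp
      then show False using mod_pred_ne_succ[OF i(1)] len unfolding j_def by simp
    next
      case False
      have "has_cycle V E"
        unfolding has_cycle_def
      proof (intro exI conjI allI impI)
        show "3 \<le> length xs" "distinct xs" using len dis by auto
        show "set xs \<subseteq> V" using sub False by auto
        fix i assume i: "i < length xs"
        have a: "adj ?E (xs ! i) (xs ! ((i + 1) mod ?n))" using ad i by auto
        have m: "(i + 1) mod ?n < ?n" using len by (intro mod_less_divisor) linarith
        have "xs ! i \<in> set xs" "xs ! ((i + 1) mod ?n) \<in> set xs" using nth_mem[OF i] nth_mem[OF m] by auto
        then have "xs ! i \<noteq> y" "xs ! ((i + 1) mod ?n) \<noteq> y" using False by auto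
        then show "adj E (xs ! i) (xs ! ((i + 1) mod ?n))" using a unfolding adj_def by (auto simp: doubleton_eq_iff)
      qed
      then show False using nc by simp
    qed
  qed
  show ?thesis unfolding is_tree_def using s' c' nc' by auto
qed

definition trisets :: "nat set \<Rightarrow> (nat \<Rightarrow> nat) \<Rightarrow> (nat \<Rightarrow> nat) \<Rightarrow> nat set set" where
  "trisets L a b = (\<Union>l\<in>L. {{l, a l}, {l, b l}, {a l, b l}})"

definition preT :: "nat set \<Rightarrow> nat set set \<Rightarrow> nat \<Rightarrow> bool" where
  "preT V E r \<longleftrightarrow> (\<exists>V0 E0 L a b. is_tree V0 E0 \<and> r \<in> V0 \<and> L \<subseteq> {l \<in> V0. degree E0 l = 1 \<and> l \<noteq> r} \<and>
        inj_on a L \<and> inj_on b L \<and> a ` L \<inter> V0 = {} \<and> b ` L \<inter> V0 = {} \<and> a ` L \<inter> b ` L = {} \<and>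
        V = V0 \<union> a ` L \<union> b ` L \<and> E = E0 \<union> trisets L a b)"

lemma tree_simple: "is_tree V E \<Longrightarrow> simple_graph V E" unfolding is_tree_def by simp

lemma preT_facts:
  assumes t: "is_tree V0 E0" and r: "r \<in> V0" and L: "L \<subseteq> {l \<in> V0. degree E0 l = 1 \<and> l \<noteq> r}"
    and a: "a ` L \<inter> V0 = {}" and b: "b ` L \<inter> V0 = {}" and ab: "a ` L \<inter> b ` L = {}"
    and V: "V = V0 \<union> a ` L \<union> b ` L" and E: "E = E0 \<union> trisets L a b"
  shows "simple_graph V E" and "degree E r = degree E0 r"
proof -
  have s0: "simple_graph V0 E0" using tree_simple[OF t] .
  have fV0: "finite V0" using s0 unfolding simple_graph_def by simp
  have LV: "L \<subseteq> V0" using L by auto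
  have fL: "finite L" using LV fV0 by (rule finite_subset)
  have la: "\<And>l. l \<in> L \<Longrightarrow> l \<noteq> a l \<and> l \<noteq> b l \<and> a l \<noteq> b l"
  proof -
    fix l assume l: "l \<in> L"
    have l0: "l \<in> V0" using LV l by auto
    have al: "a l \<notin> V0" "b l \<notin> V0" "a l \<notin> b ` L" using a b ab l by auto
    show "l \<noteq> a l \<and> l \<noteq> b l \<and> a l \<noteq> b l" using l0 al l by auto
  qed
  show "simple_graph V E"
    unfolding simple_graph_def
  proof (rule conjI)
    show "finite V" using V fV0 fL by simp
    show "\<forall>e\<in>E. e \<subseteq> V \<and> card e = 2"
    proof
    fix e assume "e \<in> E"
    then have "e \<in> E0 \<or> (\<exists>l\<in>L. e = {l, a l} \<or> e = {l, b l} \<or> e = {a l, b l})" using E unfolding trisets_def by auto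
    then show "e \<subseteq> V \<and> card e = 2"
    proof
      assume "e \<in> E0" then show ?thesis using s0 V unfolding simple_graph_def by auto
    next
      assume "\<exists>l\<in>L. e = {l, a l} \<or> e = {l, b l} \<or> e = {a l, b l}"
      then obtain l where l: "l \<in> L" "e = {l, a l} \<or> e = {l, b l} \<or> e = {a l, b l}" by blast
      then show ?thesis using la[OF l(1)] L V by auto
    qed
    qed
  qed
  have "{e \<in> E. r \<in> e} = {e \<in> E0. r \<in> e}"
  proof -
    have "\<And>l. l \<in> L \<Longrightarrow> r \<noteq> l \<and> r \<noteq> a l \<and> r \<noteq> b l"
    proof -
      fix l assume l: "l \<in> L"
      have "l \<noteq> r" using L l by auto
      moreover have "a l \<notin> V0" "b l \<notin> V0" using a b l by auto
      ultimately show "r \<noteq> l \<and> r \<noteq> a l \<and> r \<noteq> b l" using r by auto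
    qed
    then have "{e \<in> trisets L a b. r \<in> e} = {}" unfolding trisets_def by auto
    then show ?thesis using E by auto
  qed
  then show "degree E r = degree E0 r" unfolding degree_def by simp
qed

lemma preT_good: "preT V E r \<Longrightarrow> simple_graph V E \<and> r \<in> V"
proof -
  assume "preT V E r"
  then obtain V0 E0 L a b where t: "is_tree V0 E0" "r \<in> V0"
    and rest: "L \<subseteq> {l \<in> V0. degree E0 l = 1 \<and> l \<noteq> r}"
        "inj_on a L" "inj_on b L" "a ` L \<inter> V0 = {}" "b ` L \<inter> V0 = {}" "a ` L \<inter> b ` L = {}"
        "V = V0 \<union> a ` L \<union> b ` L" "E = E0 \<union> trisets L a b"
    unfolding preT_def by blast
  show ?thesis using preT_facts(1)[OF t rest(1) rest(4-8)] t(2) rest(7) by auto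
qed

lemma twt_iff: "(\<exists>V0 E0. tree_with_triangles V E r V0 E0) \<longleftrightarrow> preT V E r \<and> degree E r = 1"
proof
  assume "\<exists>V0 E0. tree_with_triangles V E r V0 E0"
  then obtain V0 E0 L a b where t: "is_tree V0 E0" "r \<in> V0" "degree E0 r = 1"
    and rest: "L \<subseteq> {l \<in> V0. degree E0 l = 1 \<and> l \<noteq> r}"
        "inj_on a L" "inj_on b L" "a ` L \<inter> V0 = {}" "b ` L \<inter> V0 = {}" "a ` L \<inter> b ` L = {}"
        "V = V0 \<union> a ` L \<union> b ` L" "E = E0 \<union> trisets L a b"
    unfolding tree_with_triangles_def root_deg1_tree_def trisets_def by blast
  have "degree E r = 1" using preT_facts(2)[OF t(1,2) rest(1) rest(4-8)] t(3) by simp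
  moreover have "preT V E r" unfolding preT_def using t rest by blast
  ultimately show "preT V E r \<and> degree E r = 1" by simp
next
  assume h: "preT V E r \<and> degree E r = 1"
  then obtain V0 E0 L a b where t: "is_tree V0 E0" "r \<in> V0"
    and rest: "L \<subseteq> {l \<in> V0. degree E0 l = 1 \<and> l \<noteq> r}"
        "inj_on a L" "inj_on b L" "a ` L \<inter> V0 = {}" "b ` L \<inter> V0 = {}" "a ` L \<inter> b ` L = {}"
        "V = V0 \<union> a ` L \<union> b ` L" "E = E0 \<union> trisets L a b"
    unfolding preT_def by blast
  have "degree E0 r = 1" using preT_facts(2)[OF t(1,2) rest(1) rest(4-8)] h by simp
  then have "tree_with_triangles V E r V0 E0"
    unfolding tree_with_triangles_def root_deg1_tree_def using t rest unfolding trisets_def by blast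
  then show "\<exists>V0 E0. tree_with_triangles V E r V0 E0" by blast
qed

lemma preT_pendant:
  assumes p: "preT V E r" and y: "y \<notin> V" and z: "z = r \<or> z = y"
  shows "preT (insert y V) (insert {r,y} E) z"
proof -
  obtain V0 E0 L a b where t: "is_tree V0 E0" "r \<in> V0"
    and rest: "L \<subseteq> {l \<in> V0. degree E0 l = 1 \<and> l \<noteq> r}"
        "inj_on a L" "inj_on b L" "a ` L \<inter> V0 = {}" "b ` L \<inter> V0 = {}" "a ` L \<inter> b ` L = {}"
        "V = V0 \<union> a ` L \<union> b ` L" "E = E0 \<union> trisets L a b"
    using p unfolding preT_def by blast
  have y0: "y \<notin> V0" "y \<notin> a ` L" "y \<notin> b ` L" using y rest(7) by auto
  have fE0: "finite E0" using simple_finite_E[OF tree_simple[OF t(1)]] .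
  have t': "is_tree (insert y V0) (insert {r,y} E0)" using tree_pendant[OF t(1,2) y0(1)] .
  have degL: "\<And>l. l \<in> L \<Longrightarrow> degree (insert {r,y} E0) l = degree E0 l"
  proof -
    fix l assume "l \<in> L"
    then have "l \<noteq> r" "l \<noteq> y" using rest(1) y0 by auto
    then show "degree (insert {r,y} E0) l = degree E0 l" using degree_insert[OF fE0] by simp
  qed
  have L': "L \<subseteq> {l \<in> insert y V0. degree (insert {r,y} E0) l = 1 \<and> l \<noteq> z}"
    using rest(1) degL z y0 by auto
  have c1: "z \<in> insert y V0" using z t(2) by auto
  have c2: "a ` L \<inter> insert y V0 = {}" "b ` L \<inter> insert y V0 = {}" using rest(4,5) y0 by auto
  have c3: "insert y V = insert y V0 \<union> a ` L \<union> b ` L" using rest(7) by auto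
  have c4: "insert {r,y} E = insert {r,y} E0 \<union> trisets L a b" using rest(8) by auto
  show ?thesis unfolding preT_def
    by (rule exI[of _ "insert y V0"], rule exI[of _ "insert {r,y} E0"], rule exI[of _ L], rule exI[of _ a], rule exI[of _ b])
      (intro conjI t' c1 L' rest(2) rest(3) c2 rest(6) c3 c4)
qed

lemma preT_sibt:
  assumes p: "preT V E r" and n: "u \<notin> V" "p \<notin> V" "q \<notin> V" and d: "u \<noteq> p" "u \<noteq> q" "p \<noteq> q"
  shows "preT (V \<union> {u,p,q}) (insert {r,u} (E \<union> tri u p q)) r"
proof -
  obtain V0 E0 L a b where t: "is_tree V0 E0" "r \<in> V0"
    and rest: "L \<subseteq> {l \<in> V0. degree E0 l = 1 \<and> l \<noteq> r}"
        "inj_on a L" "inj_on b L" "a ` L \<inter> V0 = {}" "b ` L \<inter> V0 = {}" "a ` L \<inter> b ` L = {}"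
        "V = V0 \<union> a ` L \<union> b ` L" "E = E0 \<union> trisets L a b"
    using p unfolding preT_def by blast
  have n0: "u \<notin> V0" "u \<notin> a ` L" "u \<notin> b ` L" "p \<notin> V0" "p \<notin> a ` L" "p \<notin> b ` L"
    "q \<notin> V0" "q \<notin> a ` L" "q \<notin> b ` L" using n rest(7) by auto
  have uL: "u \<notin> L" using n0 rest(1) by auto
  have fE0: "finite E0" using simple_finite_E[OF tree_simple[OF t(1)]] .
  have s0: "simple_graph V0 E0" using tree_simple[OF t(1)] .
  have t': "is_tree (insert u V0) (insert {r,u} E0)" using tree_pendant[OF t(1,2) n0(1)] .
  have degL: "\<And>l. l \<in> L \<Longrightarrow> degree (insert {r,u} E0) l = degree E0 l"
  proof -
    fix l assume "l \<in> L"
    then have "l \<noteq> r" "l \<noteq> u" using rest(1) uL by auto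
    then show "degree (insert {r,u} E0) l = degree E0 l" using degree_insert[OF fE0] by simp
  qed
  have ru: "r \<noteq> u" using t(2) n0 by auto
  have degu: "degree (insert {r,u} E0) u = 1"
    using degree_insert[OF fE0, of "{r,u}" u] degree_zero[OF s0 n0(1)] s0 t(2) n0(1)
    unfolding simple_graph_def by auto
  define a' where "a' = a(u := p)"
  define b' where "b' = b(u := q)"
  have aL: "a' ` L = a ` L" and bL: "b' ` L = b ` L" unfolding a'_def b'_def using uL by auto
  have a'i: "a' ` insert u L = insert p (a ` L)" and b'i: "b' ` insert u L = insert q (b ` L)"
    using aL bL unfolding a'_def b'_def by auto
  have L': "insert u L \<subseteq> {l \<in> insert u V0. degree (insert {r,u} E0) l = 1 \<and> l \<noteq> r}"
    using rest(1) degL degu ru by auto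
  have inja: "inj_on a' (insert u L)"
    using rest(2) n0(5) uL unfolding a'_def inj_on_def by auto
  have injb: "inj_on b' (insert u L)"
    using rest(3) n0(9) uL unfolding b'_def inj_on_def by auto
  have V': "V \<union> {u,p,q} = insert u V0 \<union> a' ` insert u L \<union> b' ` insert u L"
    unfolding a'i b'i rest(7) by auto
  have tri_eq: "trisets (insert u L) a' b' = tri u p q \<union> trisets L a b"
  proof -
    have "trisets L a' b' = trisets L a b" unfolding trisets_def a'_def b'_def using uL
      by (intro SUP_cong) auto
    then show ?thesis unfolding trisets_def tri_def a'_def b'_def by simp
  qed
  have E': "insert {r,u} (E \<union> tri u p q) = insert {r,u} E0 \<union> trisets (insert u L) a' b'"
    unfolding tri_eq rest(8) by auto
  have c1: "r \<in> insert u V0" using t(2) by auto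
  have c2: "a' ` insert u L \<inter> insert u V0 = {}" "b' ` insert u L \<inter> insert u V0 = {}"
    unfolding a'i b'i using rest(4,5) n0 d by auto
  have c3: "a' ` insert u L \<inter> b' ` insert u L = {}" unfolding a'i b'i using rest(6) n0 d by auto
  show ?thesis unfolding preT_def
    by (rule exI[of _ "insert u V0"], rule exI[of _ "insert {r,u} E0"], rule exI[of _ "insert u L"], rule exI[of _ a'], rule exI[of _ b'])
      (intro conjI t' c1 L' inja injb c2 c3 V' E')
qed

definition special :: "real \<Rightarrow> real \<Rightarrow> real \<Rightarrow> bool" where
  "special b g l \<longleftrightarrow> l = (1 - b) / (1 - g) \<and> b \<noteq> g"

definition ginv :: "real \<Rightarrow> real \<Rightarrow> real \<Rightarrow> rgraph \<Rightarrow> bool" where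
  "ginv b g l T = (case T of (V,E,r) \<Rightarrow> if special b g l then preT V E r else (is_tree V E \<and> r \<in> V))"

definition rootdeg :: "rgraph \<Rightarrow> nat" where
  "rootdeg T = (case T of (V,E,r) \<Rightarrow> degree E r)"

lemma ext_eq: "gext (V,E,r) = (insert (fr V 0) V, insert {r, fr V 0} E, fr V 0)" unfolding gext_def by simp
lemma sibl_eq: "sibl (V,E,r) = (insert (fr V 0) V, insert {r, fr V 0} E, r)" unfolding sibl_def by simp
lemma sibt_eq: "sibt (V,E,r) = (V \<union> {fr V 0, fr V 1, fr V 2}, insert {r, fr V 0} (E \<union> tri (fr V 0) (fr V 1) (fr V 2)), r)"
  unfolding sibt_def by simp

lemma gadget_inv:
  assumes "field_gadget b g l T"
  shows "ginv b g l T" and "rootdeg T = 1"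
proof -
  obtain V E r where T: "T = (V,E,r)" by (cases T) auto
  have "ginv b g l T \<and> rootdeg T = 1"
  proof (cases "special b g l")
    case True
    then have "\<exists>V0 E0. tree_with_triangles V E r V0 E0" using assms T unfolding field_gadget_def special_def by simp
    then show ?thesis using twt_iff True T unfolding ginv_def rootdeg_def by simp
  next
    case False
    then have "root_deg1_tree V E r" using assms T unfolding field_gadget_def special_def by simp
    then show ?thesis using False T unfolding ginv_def rootdeg_def root_deg1_tree_def by simp
  qed
  then show "ginv b g l T" and "rootdeg T = 1" by auto
qed

lemma inv_good: "ginv b g l T \<Longrightarrow> good T"
  unfolding ginv_def good_def using preT_good tree_simple by (auto split: prod.splits if_splits)

lemma inv_ext_gadget:
  assumes i: "ginv b g l T"
  shows "field_gadget b g l (gext T)"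
proof -
  obtain V E r where T: "T = (V,E,r)" by (cases T) auto
  have gd: "good T" using inv_good[OF i] .
  then have s: "simple_graph V E" and r: "r \<in> V" using T unfolding good_def by auto
  have fV: "finite V" using s unfolding simple_graph_def by simp
  define n where "n = fr V 0"
  have n: "n \<notin> V" using fr_notin[OF fV] n_def by simp
  have rn: "r \<noteq> n" using r n by auto
  have dn: "degree (insert {r,n} E) n = 1"
    using degree_insert[OF simple_finite_E[OF s], of "{r,n}" n] degree_zero[OF s n] s n
    unfolding simple_graph_def by auto
  show ?thesis
  proof (cases "special b g l")
    case True
    then have p: "preT V E r" using i T unfolding ginv_def by simp
    have "preT (insert n V) (insert {r,n} E) n" using preT_pendant[OF p n] by simp
    then have "\<exists>V0 E0. tree_with_triangles (insert n V) (insert {r,n} E) n V0 E0" using twt_iff dn by simp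
    then show ?thesis using True unfolding field_gadget_def ext_eq T n_def[symmetric] special_def by simp
  next
    case False
    then have t: "is_tree V E" using i T unfolding ginv_def by simp
    have "root_deg1_tree (insert n V) (insert {r,n} E) n"
      unfolding root_deg1_tree_def using tree_pendant[OF t r n] dn by simp
    have ne: "(l = (1 - b) / (1 - g) \<and> b \<noteq> g) = False" using False unfolding special_def by simp
    show ?thesis using \<open>root_deg1_tree (insert n V) (insert {r,n} E) n\<close>
      unfolding field_gadget_def ext_eq T n_def[symmetric] prod.case ne if_False .
  qed
qed

lemma inv_ext: "ginv b g l T \<Longrightarrow> ginv b g l (gext T)"
  using gadget_inv(1)[OF inv_ext_gadget] .

lemma inv_sibl:
  assumes ns: "\<not> special b g l" and i: "ginv b g l T"
  shows "ginv b g l (sibl T)"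
proof -
  obtain V E r where T: "T = (V,E,r)" by (cases T) auto
  have t: "is_tree V E" and r: "r \<in> V" using i T ns unfolding ginv_def by auto
  have fV: "finite V" using tree_simple[OF t] unfolding simple_graph_def by simp
  have n: "fr V 0 \<notin> V" using fr_notin[OF fV] by simp
  show ?thesis using tree_pendant[OF t r n] ns r unfolding ginv_def T sibl_eq by simp
qed

lemma inv_sibt:
  assumes sp: "special b g l" and i: "ginv b g l T"
  shows "ginv b g l (sibt T)"
proof -
  obtain V E r where T: "T = (V,E,r)" by (cases T) auto
  have p: "preT V E r" using i T sp unfolding ginv_def by auto
  have fV: "finite V" using preT_good[OF p] unfolding simple_graph_def by simp
  have n: "fr V 0 \<notin> V" "fr V 1 \<notin> V" "fr V 2 \<notin> V" using fr_notin[OF fV] by auto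
  show ?thesis using preT_sibt[OF p n] sp unfolding ginv_def T sibt_eq by simp
qed

lemma deg_pend:
  assumes s: "simple_graph V E" and r: "r \<in> V" and y: "y \<notin> V" and m: "max_degree_le V E D"
    and dr: "degree E r + 1 \<le> D"
  shows "max_degree_le (insert y V) (insert {r,y} E) D" and "degree (insert {r,y} E) r = degree E r + 1"
    and "degree (insert {r,y} E) y = 1"
proof -
  have fE: "finite E" using simple_finite_E[OF s] .
  have nin: "{r,y} \<notin> E" using s y unfolding simple_graph_def by auto
  have ry: "r \<noteq> y" using r y by auto
  have dg: "\<And>w. degree (insert {r,y} E) w = degree E w + (if w = r \<or> w = y then 1 else 0)"
    using degree_insert[OF fE] nin by simp
  show "degree (insert {r,y} E) r = degree E r + 1" using dg by simp
  show dy: "degree (insert {r,y} E) y = 1" using dg degree_zero[OF s y] by simp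
  show "max_degree_le (insert y V) (insert {r,y} E) D"
    unfolding max_degree_le_def
  proof
    fix w assume w: "w \<in> insert y V"
    show "degree (insert {r,y} E) w \<le> D"
    proof (cases "w = y")
      case True then show ?thesis using dy dr by simp
    next
      case False
      then have "w \<in> V" using w by simp
      then show ?thesis using dg m dr False unfolding max_degree_le_def by auto
    qed
  qed
qed

lemma deg_sibt:
  assumes s: "simple_graph V E" and r: "r \<in> V" and n: "u \<notin> V" "p \<notin> V" "q \<notin> V"
    and d: "u \<noteq> p" "u \<noteq> q" "p \<noteq> q" and m: "max_degree_le V E D"
    and dr: "degree E r + 1 \<le> D" and D: "3 \<le> D"
  shows "max_degree_le (V \<union> {u,p,q}) (insert {r,u} (E \<union> tri u p q)) D"
    and "degree (insert {r,u} (E \<union> tri u p q)) r = degree E r + 1"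
proof -
  have fE: "finite E" using simple_finite_E[OF s] .
  have ft: "finite (tri u p q)" unfolding tri_def by simp
  have EV: "\<forall>e\<in>E. e \<subseteq> V" using s unfolding simple_graph_def by auto
  have dis: "E \<inter> tri u p q = {}" using EV n unfolding tri_def by auto
  have nin: "{r,u} \<notin> E \<union> tri u p q" using EV n r d unfolding tri_def by (auto simp: doubleton_eq_iff)
  have dg: "\<And>w. degree (insert {r,u} (E \<union> tri u p q)) w = degree E w + degree (tri u p q) w + (if w = r \<or> w = u then 1 else 0)"
    using degree_insert[of "E \<union> tri u p q"] fE ft nin degree_union[OF fE ft dis] by simp
  have rr: "r \<notin> {u,p,q}" using r n by auto
  show "degree (insert {r,u} (E \<union> tri u p q)) r = degree E r + 1" using dg degree_tri[OF d] rr by simp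
  show "max_degree_le (V \<union> {u,p,q}) (insert {r,u} (E \<union> tri u p q)) D"
    unfolding max_degree_le_def
  proof
    fix w assume w: "w \<in> V \<union> {u,p,q}"
    show "degree (insert {r,u} (E \<union> tri u p q)) w \<le> D"
    proof (cases "w \<in> V")
      case True
      then have "w \<notin> {u,p,q}" using n by auto
      then show ?thesis using dg degree_tri[OF d] m dr True unfolding max_degree_le_def by auto
    next
      case False
      then have "w \<in> {u,p,q}" "degree E w = 0" using w degree_zero[OF s] by auto
      then show ?thesis using dg degree_tri[OF d] D False r by auto
    qed
  qed
qed

lemma ext_deg:
  assumes "good T" "gadget_max_degree_le T D" "rootdeg T + 1 \<le> D"
  shows "gadget_max_degree_le (gext T) D" and "rootdeg (gext T) = 1"
proof -
  obtain V E r where T: "T = (V,E,r)" by (cases T) auto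
  have s: "simple_graph V E" and r: "r \<in> V" using assms T unfolding good_def by auto
  have fV: "finite V" using s unfolding simple_graph_def by simp
  note X = deg_pend[OF s r fr_notin[OF fV, of 0]]
  have m: "max_degree_le V E D" using assms(2) T unfolding gadget_max_degree_le_def by simp
  have dr: "degree E r + 1 \<le> D" using assms(3) T unfolding rootdeg_def by simp
  show "gadget_max_degree_le (gext T) D" "rootdeg (gext T) = 1"
    using X[OF m dr]  unfolding T gadget_max_degree_le_def rootdeg_def ext_eq by auto
qed

lemma sibl_deg:
  assumes "good T" "gadget_max_degree_le T D" "rootdeg T + 1 \<le> D"
  shows "gadget_max_degree_le (sibl T) D" and "rootdeg (sibl T) = rootdeg T + 1"
proof -
  obtain V E r where T: "T = (V,E,r)" by (cases T) auto
  have s: "simple_graph V E" and r: "r \<in> V" using assms T unfolding good_def by auto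
  have fV: "finite V" using s unfolding simple_graph_def by simp
  note X = deg_pend[OF s r fr_notin[OF fV, of 0]]
  have m: "max_degree_le V E D" using assms(2) T unfolding gadget_max_degree_le_def by simp
  have dr: "degree E r + 1 \<le> D" using assms(3) T unfolding rootdeg_def by simp
  show "gadget_max_degree_le (sibl T) D" "rootdeg (sibl T) = rootdeg T + 1"
    using X[OF m dr]  unfolding T gadget_max_degree_le_def rootdeg_def sibl_eq by auto
qed

lemma sibt_deg:
  assumes "good T" "gadget_max_degree_le T D" "rootdeg T + 1 \<le> D" "3 \<le> D"
  shows "gadget_max_degree_le (sibt T) D" and "rootdeg (sibt T) = rootdeg T + 1"
proof -
  obtain V E r where T: "T = (V,E,r)" by (cases T) auto
  have s: "simple_graph V E" and r: "r \<in> V" using assms T unfolding good_def by auto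
  have fV: "finite V" using s unfolding simple_graph_def by simp
  have n: "fr V 0 \<notin> V" "fr V 1 \<notin> V" "fr V 2 \<notin> V" using fr_notin[OF fV] by auto
  have d: "fr V 0 \<noteq> fr V 1" "fr V 0 \<noteq> fr V 2" "fr V 1 \<noteq> fr V 2" by auto
  note X = deg_sibt[OF s r n d]
  have m: "max_degree_le V E D" using assms(2) T unfolding gadget_max_degree_le_def by simp
  have dr: "degree E r + 1 \<le> D" using assms(3) T unfolding rootdeg_def by simp
  show "gadget_max_degree_le (sibt T) D" "rootdeg (sibt T) = rootdeg T + 1"
    using X[OF m dr] assms(4) unfolding T gadget_max_degree_le_def rootdeg_def sibt_eq by auto
qed

definition ff :: "real \<Rightarrow> real \<Rightarrow> real \<Rightarrow> real \<Rightarrow> real" where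
  "ff b g l x = (g*l*x + 1) / (l*x + b)"

definition Rf :: "real \<Rightarrow> real \<Rightarrow> real \<Rightarrow> rgraph \<Rightarrow> real" where
  "Rf b g l T = Z1 b g l T / (l * Z0 b g l T)"

lemma af_facts: "antiferromagnetic b g \<Longrightarrow> b \<ge> 0 \<and> g \<ge> 0 \<and> g*b < 1 \<and> (b > 0 \<or> g > 0)"
  unfolding antiferromagnetic_def by (auto simp: mult.commute)

context
  fixes b g l :: real
  assumes af: "antiferromagnetic b g" and lp: "l > 0"
begin

lemma b0: "b \<ge> 0" and g0: "g \<ge> 0" and gb: "g*b < 1" and bgp: "b > 0 \<or> g > 0"
  using af_facts[OF af] by auto

lemma bgl: "b + g*l > 0"
  using b0 g0 bgp lp by (auto simp: add_pos_nonneg add_nonneg_pos)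

lemma ff_pos: "x > 0 \<Longrightarrow> ff b g l x > 0"
  unfolding ff_def using b0 g0 lp by (intro divide_pos_pos add_nonneg_pos add_pos_nonneg) auto

lemma ff_dec:
  assumes x: "0 < x" and xy: "x < y"
  shows "ff b g l y < ff b g l x"
proof -
  have dx: "l*x + b > 0" and dy: "l*y + b > 0" using x xy lp b0 by (auto intro: add_pos_nonneg)
  have p: "0 < l*(y-x)*(1-g*b)" using lp xy gb by simp
  have e: "(g*l*x+1)*(l*y+b) - (g*l*y+1)*(l*x+b) = l*(y-x)*(1-g*b)" by (simp add: algebra_simps)
  have key: "(g*l*y+1)*(l*x+b) < (g*l*x+1)*(l*y+b)" using p e by linarith
  show ?thesis unfolding ff_def using dx dy key by (simp add: field_simps)
qed

lemma ff_inj: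
  assumes "0 < x" "0 < y" "ff b g l x = ff b g l y" shows "x = y"
proof (rule ccontr)
  assume "x \<noteq> y"
  then consider "x < y" | "y < x" by linarith
  then show False
  proof cases
    case 1 then show False using ff_dec[OF assms(1) 1] assms(3) by simp
  next
    case 2 then show False using ff_dec[OF assms(2) 2] assms(3) by simp
  qed
qed

lemma fix_unique:
  assumes "0 < x" "0 < y" "ff b g l x = x" "ff b g l y = y" shows "x = y"
proof (rule ccontr)
  assume "x \<noteq> y"
  then consider "x < y" | "y < x" by linarith
  then show False
  proof cases
    case 1 then show False using ff_dec[OF assms(1) 1] assms(3,4) by simp
  next
    case 2 then show False using ff_dec[OF assms(2) 2] assms(3,4) by simp
  qed
qed

lemma two_cycle:
  assumes x: "0 < x" and c: "ff b g l (ff b g l x) = x"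
  shows "ff b g l x = x"
proof -
  define z where "z = ff b g l x"
  have z: "z > 0" using ff_pos[OF x] z_def by simp
  have dx: "l*x + b > 0" and dz: "l*z + b > 0" using x z lp b0 by (auto intro: add_pos_nonneg)
  have e1: "z*(l*x+b) = g*l*x + 1" using dx unfolding z_def ff_def by (simp add: divide_eq_eq)
  have c': "(g*l*z + 1) / (l*z + b) = x" using c unfolding z_def ff_def[of b g l "ff b g l x"] by (simp only: ff_def)
  have e2: "x*(l*z+b) = g*l*z + 1" using c' dz by (simp add: divide_eq_eq)
  have "(b + g*l)*(z - x) = 0" using e1 e2 by (simp add: algebra_simps)
  then show ?thesis using bgl z_def by simp
qed

definition hh where "hh x = ff b g l (ff b g l x)"

lemma hh_pos: "x > 0 \<Longrightarrow> hh x > 0" unfolding hh_def using ff_pos by simp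
lemma hh_mono: "0 < x \<Longrightarrow> x < y \<Longrightarrow> hh x < hh y"
proof -
  assume x: "0 < x" and xy: "x < y"
  have "ff b g l y < ff b g l x" by (rule ff_dec[OF x xy])
  moreover have "0 < ff b g l y" using ff_pos x xy by simp
  ultimately show "hh x < hh y" unfolding hh_def using ff_dec by blast
qed

lemma hh_iter_pos: "x > 0 \<Longrightarrow> (hh ^^ j) x > 0"
  by (induction j) (auto simp: hh_pos)

lemma inc_inj: "(\<And>j. s j < s (Suc j)) \<Longrightarrow> inj (s :: nat \<Rightarrow> real)"
  by (intro strict_mono_imp_inj_on) (simp add: strict_mono_Suc_iff)

lemma seq_inj:
  assumes x: "x > 0" and nf: "ff b g l x \<noteq> x"
  shows "inj (\<lambda>j. (hh ^^ j) x)"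
proof -
  have ne: "hh x \<noteq> x" using two_cycle[OF x] nf unfolding hh_def by auto
  show ?thesis
  proof (cases "x < hh x")
    case True
    have "\<And>j. (hh ^^ j) x < (hh ^^ Suc j) x"
    proof -
      fix j show "(hh ^^ j) x < (hh ^^ Suc j) x"
      proof (induction j)
        case 0 then show ?case using True by simp
      next
        case (Suc j)
        then show ?case using hh_mono[OF hh_iter_pos[OF x]] by simp
      qed
    qed
    then show ?thesis by (rule inc_inj)
  next
    case False
    then have lt: "hh x < x" using ne by simp
    have "\<And>j. (hh ^^ Suc j) x < (hh ^^ j) x"
    proof -
      fix j show "(hh ^^ Suc j) x < (hh ^^ j) x"
      proof (induction j)
        case 0 then show ?case using lt by simp
      next
        case (Suc j)
        have "hh ((hh ^^ Suc j) x) < hh ((hh ^^ j) x)"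
          by (rule hh_mono[OF hh_iter_pos[OF x] Suc])
        then show ?case by simp
      qed
    qed
    then have "inj (\<lambda>j. - (hh ^^ j) x)" by (intro inc_inj) simp
    then show ?thesis unfolding inj_def by auto
  qed
qed

end

definition sib :: "real \<Rightarrow> real \<Rightarrow> real \<Rightarrow> rgraph \<Rightarrow> rgraph" where
  "sib b g l T = (if special b g l then sibt T else sibl T)"
definition cval :: "real \<Rightarrow> real \<Rightarrow> real \<Rightarrow> real" where
  "cval b g l = (if special b g l then (g*K1t b g l + K0t b g l)/(K1t b g l + b*K0t b g l) else (g*l+1)/(l+b))"
definition esc :: "real \<Rightarrow> real \<Rightarrow> real \<Rightarrow> rgraph \<Rightarrow> rgraph" where
  "esc b g l T = gext (sib b g l (gext T))"
definition GG :: "real \<Rightarrow> real \<Rightarrow> real \<Rightarrow> nat \<Rightarrow> rgraph \<Rightarrow> bool" where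
  "GG b g l D T \<longleftrightarrow> field_gadget b g l T \<and> gadget_max_degree_le T D \<and> rootdeg T = 1"

context
  fixes b g l :: real
  assumes af: "antiferromagnetic b g" and lp: "l > 0"
begin

lemma K1t_pos: "K1t b g l > 0"
proof -
  have "l^2*g^3 + 2*l*g + b > 0"
  proof (cases "b > 0")
    case True then show ?thesis using g0[OF af lp] lp by (intro add_nonneg_pos) auto
  next
    case False
    then have "g > 0" using bgp[OF af lp] by auto
    then show ?thesis using b0[OF af lp] lp by (intro add_pos_nonneg add_nonneg_pos) auto
  qed
  then show ?thesis unfolding K1t_def using lp by simp
qed

lemma K0t_pos: "K0t b g l > 0"
proof -
  have "l^2*g + 2*l*b + b^3 > 0"
  proof (cases "b > 0")
    case True then show ?thesis using g0[OF af lp] lp by (intro add_nonneg_pos) auto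
  next
    case False
    then have "g > 0" "b = 0" using bgp[OF af lp] b0[OF af lp] by auto
    then show ?thesis using lp by simp
  qed
  then show ?thesis unfolding K0t_def by simp
qed

lemma Rf_pos: "good T \<Longrightarrow> Rf b g l T > 0"
  unfolding Rf_def using Z_pos[OF af lp] lp by simp

lemma Rf_ext: assumes "good T" shows "Rf b g l (gext T) = ff b g l (Rf b g l T)"
proof -
  note o = ext_lin[of b g l, unfolded lin_op_def, rule_format, OF assms]
  have p1: "Z1 b g l T > 0" and p0: "Z0 b g l T > 0" using Z_pos[OF af lp assms] by auto
  have d: "Z1 b g l T + b * Z0 b g l T > 0" using p1 p0 b0[OF af lp] by (simp add: add_pos_nonneg)
  have A: "Rf b g l (gext T) = (g*Z1 b g l T + Z0 b g l T)/(Z1 b g l T + b*Z0 b g l T)"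
  proof -
    have "Rf b g l (gext T) = (l*(g*Z1 b g l T + Z0 b g l T))/(l*(Z1 b g l T + b*Z0 b g l T))"
      unfolding Rf_def using o by (simp add: algebra_simps)
    also have "\<dots> = (g*Z1 b g l T + Z0 b g l T)/(Z1 b g l T + b*Z0 b g l T)"
      using lp by simp
    finally show ?thesis .
  qed
  have B: "ff b g l (Rf b g l T) = (g*Z1 b g l T + Z0 b g l T)/(Z1 b g l T + b*Z0 b g l T)"
  proof -
    have n: "g*l*(Z1 b g l T/(l*Z0 b g l T)) + 1 = (g*Z1 b g l T + Z0 b g l T)/Z0 b g l T"
      using p0 lp by (simp add: field_simps)
    have dd: "l*(Z1 b g l T/(l*Z0 b g l T)) + b = (Z1 b g l T + b*Z0 b g l T)/Z0 b g l T"
      using p0 lp by (simp add: field_simps)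
    show ?thesis unfolding ff_def Rf_def n dd using p0 by simp
  qed
  show ?thesis using A B by simp
qed

lemma Rf_sib: assumes "good T" shows "Rf b g l (sib b g l T) = cval b g l * Rf b g l T"
proof -
  have p1: "Z1 b g l T > 0" and p0: "Z0 b g l T > 0" using Z_pos[OF af lp assms] by auto
  show ?thesis
  proof (cases "special b g l")
    case True
    note o = sibt_lin[of b g l, unfolded lin_op_def, rule_format, OF assms]
    have d: "K1t b g l + b * K0t b g l > 0" using K1t_pos K0t_pos b0[OF af lp] by (simp add: add_pos_nonneg)
    show ?thesis unfolding Rf_def sib_def cval_def using True o p1 p0 d lp by (simp add: field_simps)
  next
    case False
    note o = sibl_lin[of b g l, unfolded lin_op_def, rule_format, OF assms]
    have d: "l + b > 0" using lp b0[OF af lp] by simp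
    show ?thesis unfolding Rf_def sib_def cval_def using False o p1 p0 d lp by (simp add: field_simps)
  qed
qed

lemma cval_pos: "cval b g l > 0"
proof -
  have "(g*K1t b g l + K0t b g l)/(K1t b g l + b*K0t b g l) > 0"
    using K1t_pos K0t_pos b0[OF af lp] g0[OF af lp] by (intro divide_pos_pos add_nonneg_pos add_pos_nonneg) auto
  moreover have "(g*l+1)/(l+b) > 0" using lp b0[OF af lp] g0[OF af lp] by (intro divide_pos_pos add_nonneg_pos add_pos_nonneg) auto
  ultimately show ?thesis unfolding cval_def by simp
qed

lemma cval_ne1:
  assumes ex: "\<not> (g = b \<and> l = 1)"
  shows "cval b g l \<noteq> 1"
proof (cases "special b g l")
  case True
  then have le: "l = (1 - b) / (1 - g)" and bg: "b \<noteq> g" unfolding special_def by auto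
  have g1: "g \<noteq> 1" using le lp by auto
  then have bexp: "b = 1 - l*(1-g)" using le by (simp add: field_simps)
  have l1: "l \<noteq> 1" using bexp bg by auto
  have d: "K1t b g l + b * K0t b g l > 0" using K1t_pos K0t_pos b0[OF af lp] by (simp add: add_pos_nonneg)
  define d where "d = 1 - g"
  have gd: "g = 1 - d" and bd: "b = 1 - l*d" using bexp d_def by auto
  have d0: "d \<noteq> 0" using g1 d_def by simp
  have s1: "(g*K1t b g l + K0t b g l) - (K1t b g l + b*K0t b g l) = K0t b g l*(1-b) - K1t b g l*(1-g)"
    by (simp add: algebra_simps)
  have e1: "1 - b = l*d" and e2: "1 - g = d" using bd gd by auto
  have s2: "K0t b g l*(1-b) - K1t b g l*(1-g) = d*(l*K0t b g l - K1t b g l)"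
    unfolding e1 e2 by (simp add: algebra_simps)
  have s3: "l*K0t b g l - K1t b g l = l*(l^2*g + 2*l*b + b^3 - l^2*g^3 - 2*l*g - b)"
    unfolding K1t_def K0t_def by (simp add: algebra_simps)
  have s4: "l^2*g + 2*l*b + b^3 - l^2*g^3 - 2*l*g - b = l^2*d^3*(1-l)"
    unfolding gd bd by (simp add: power3_eq_cube power2_eq_square algebra_simps)
  have "(g*K1t b g l + K0t b g l) - (K1t b g l + b*K0t b g l) = d*(l*(l^2*d^3*(1-l)))"
    unfolding s1 s2 s3 s4 ..
  moreover have "d*(l*(l^2*d^3*(1-l))) \<noteq> 0" using d0 lp l1 by simp
  ultimately have "g*K1t b g l + K0t b g l \<noteq> K1t b g l + b*K0t b g l" by auto
  then show ?thesis unfolding cval_def using True d by simp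
next
  case False
  have d: "l + b > 0" using lp b0[OF af lp] by simp
  have "g*l + 1 \<noteq> l + b"
  proof
    assume e: "g*l + 1 = l + b"
    show False
    proof (cases "g = 1")
      case True
      then have "b = 1" using e by simp
      then show False using gb[OF af lp] True by simp
    next
      case g1: False
      then have "l = (1 - b)/(1 - g)" using e by (simp add: field_simps)
      then have "b = g" using False unfolding special_def by simp
      then have "(l - 1) * (g - 1) = 0" using e by (simp add: algebra_simps)
      then have "l = 1" using g1 by simp
      then show False using ex \<open>b = g\<close> by simp
    qed
  qed
  then show ?thesis unfolding cval_def using False d by simp
qed

lemma pair_ext: "good T \<Longrightarrow> good T' \<Longrightarrow> pairok b g l T T' \<Longrightarrow> pairok b g l (gext T) (gext T')"
proof -
  assume a: "good T" "good T'" "pairok b g l T T'"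
  have "g*l*b < 1*l" using gb[OF af lp] lp by (simp add: mult.commute mult.left_commute)
  then have D: "g*l*b \<noteq> 1*l" by (rule less_imp_neq)
  show ?thesis using lin_op_pair(1)[OF af lp ext_lin D a] .
qed

lemma good_ext: "good T \<Longrightarrow> good (gext T)"
  using ext_lin[of b g l] unfolding lin_op_def by blast
lemma good_sib: "good T \<Longrightarrow> good (sib b g l T)"
proof -
  assume a: "good T"
  have "good (sibt T)" using sibt_lin[of b g l] a unfolding lin_op_def by blast
  moreover have "good (sibl T)" using sibl_lin[of b g l] a unfolding lin_op_def by blast
  ultimately show ?thesis unfolding sib_def by simp
qed

lemma pair_sib: "good T \<Longrightarrow> good T' \<Longrightarrow> pairok b g l T T' \<Longrightarrow> pairok b g l (sib b g l T) (sib b g l T')"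
proof -
  assume a: "good T" "good T'" "pairok b g l T T'"
  show ?thesis
  proof (cases "special b g l")
    case True
    have "(g*K1t b g l + K0t b g l) * (K1t b g l + b*K0t b g l) > 0"
      using K1t_pos K0t_pos b0[OF af lp] g0[OF af lp] by (intro mult_pos_pos add_nonneg_pos add_pos_nonneg) auto
    then have D: "(g*K1t b g l + K0t b g l) * (K1t b g l + b*K0t b g l) \<noteq> 0 * 0" by linarith
    show ?thesis using lin_op_pair(1)[OF af lp sibt_lin D a] True unfolding sib_def by simp
  next
    case False
    have "(g*l+1)*(l+b) > 0" using lp b0[OF af lp] g0[OF af lp] by (intro mult_pos_pos add_nonneg_pos add_pos_nonneg) auto
    then have D: "(g*l+1)*(l+b) \<noteq> 0 * 0" by linarith
    show ?thesis using lin_op_pair(1)[OF af lp sibl_lin D a] False unfolding sib_def by simp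
  qed
qed

lemma GG_good: "GG b g l D T \<Longrightarrow> good T"
  unfolding GG_def using gadget_inv(1) inv_good by blast

lemma GG_ext: assumes D: "3 \<le> D" and G: "GG b g l D T" shows "GG b g l D (gext T)"
proof -
  have f: "field_gadget b g l T" and m: "gadget_max_degree_le T D" and r: "rootdeg T = 1" using G unfolding GG_def by auto
  have i: "ginv b g l T" using gadget_inv(1)[OF f] .
  have gd: "good T" using inv_good[OF i] .
  show ?thesis unfolding GG_def using inv_ext_gadget[OF i] ext_deg[OF gd m] r D by simp
qed

lemma GG_esc: assumes D: "3 \<le> D" and G: "GG b g l D T" shows "GG b g l D (esc b g l T)"
proof -
  have f: "field_gadget b g l T" and m: "gadget_max_degree_le T D" and r: "rootdeg T = 1" using G unfolding GG_def by auto
  have i: "ginv b g l T" using gadget_inv(1)[OF f] .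
  have gd: "good T" using inv_good[OF i] .
  have i1: "ginv b g l (gext T)" using inv_ext[OF i] .
  have g1: "good (gext T)" using inv_good[OF i1] .
  have m1: "gadget_max_degree_le (gext T) D" and r1: "rootdeg (gext T) = 1" using ext_deg[OF gd m] r D by auto
  have i2: "ginv b g l (sib b g l (gext T))" unfolding sib_def using inv_sibt[OF _ i1] inv_sibl[OF _ i1] by auto
  have g2: "good (sib b g l (gext T))" using inv_good[OF i2] .
  have m2: "gadget_max_degree_le (sib b g l (gext T)) D" and r2: "rootdeg (sib b g l (gext T)) = 2"
    unfolding sib_def using sibt_deg[OF g1 m1 _ D] sibl_deg[OF g1 m1] r1 D by auto
  show ?thesis unfolding GG_def esc_def using inv_ext_gadget[OF i2] ext_deg[OF g2 m2] r2 D by simp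
qed

lemma pair_esc: "good T \<Longrightarrow> good T' \<Longrightarrow> pairok b g l T T' \<Longrightarrow> pairok b g l (esc b g l T) (esc b g l T')"
  unfolding esc_def by (intro pair_ext pair_sib good_ext good_sib) auto

lemma Rf_esc: "good T \<Longrightarrow> Rf b g l (esc b g l T) = ff b g l (cval b g l * ff b g l (Rf b g l T))"
  unfolding esc_def by (simp add: Rf_ext Rf_sib good_ext good_sib)

end

lemma pairok_Rf:
  assumes af: "antiferromagnetic b g" and lp: "l > 0" and g1: "good T" and g2: "good T'" and p: "pairok b g l T T'"
  shows "Rf b g l T = Rf b g l T'"
proof -
  have a: "Z0 b g l T > 0" "Z0 b g l T' > 0" using Z_pos[OF af lp g1] Z_pos[OF af lp g2] by auto
  have e: "Z1 b g l T * Z0 b g l T' = Z1 b g l T' * Z0 b g l T" using p unfolding pairok_def by simp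
  show ?thesis unfolding Rf_def using a lp e by (simp add: field_simps)
qed

theorem lemma2p8:
  fixes \<Delta> :: nat and \<beta> \<gamma> lam :: real
  assumes "\<Delta> \<ge> 3"
    and "antiferromagnetic \<beta> \<gamma>"
    and "lam > 0"
    and "\<not> (\<gamma> = \<beta> \<and> lam = 1)"
    and "\<exists>T1 T2. field_gadget \<beta> \<gamma> lam T1 \<and> field_gadget \<beta> \<gamma> lam T2 \<and>
           gadget_max_degree_le T1 \<Delta> \<and> gadget_max_degree_le T2 \<Delta> \<and>
           eff_field \<beta> \<gamma> lam T1 = eff_field \<beta> \<gamma> lam T2 \<and>
           mag_gap \<beta> \<gamma> lam T1 \<noteq> mag_gap \<beta> \<gamma> lam T2"
  shows "\<exists>T1s T2s :: nat \<Rightarrow> rgraph.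
           (\<forall>j. field_gadget \<beta> \<gamma> lam (T1s j) \<and> field_gadget \<beta> \<gamma> lam (T2s j) \<and>
                gadget_max_degree_le (T1s j) \<Delta> \<and> gadget_max_degree_le (T2s j) \<Delta> \<and>
                eff_field \<beta> \<gamma> lam (T1s j) = eff_field \<beta> \<gamma> lam (T2s j) \<and>
                mag_gap \<beta> \<gamma> lam (T1s j) \<noteq> mag_gap \<beta> \<gamma> lam (T2s j)) \<and>
           inj (\<lambda>j. eff_field \<beta> \<gamma> lam (T1s j))"
proof -
  note D = assms(1) and af = assms(2) and lp = assms(3) and ex = assms(4)
  obtain T1 T2 where f1: "field_gadget \<beta> \<gamma> lam T1" and f2: "field_gadget \<beta> \<gamma> lam T2"
    and m1: "gadget_max_degree_le T1 \<Delta>" and m2: "gadget_max_degree_le T2 \<Delta>"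
    and R12: "eff_field \<beta> \<gamma> lam T1 = eff_field \<beta> \<gamma> lam T2"
    and M12: "mag_gap \<beta> \<gamma> lam T1 \<noteq> mag_gap \<beta> \<gamma> lam T2"
    using assms(5) by blast
  have G1: "GG \<beta> \<gamma> lam \<Delta> T1" and G2: "GG \<beta> \<gamma> lam \<Delta> T2"
    unfolding GG_def using f1 f2 m1 m2 gadget_inv(2) by auto
  have g1: "good T1" and g2: "good T2" using GG_good[OF af lp G1] GG_good[OF af lp G2] by auto
  have pos: "Z1 \<beta> \<gamma> lam T1 > 0" "Z0 \<beta> \<gamma> lam T1 > 0" "Z1 \<beta> \<gamma> lam T2 > 0" "Z0 \<beta> \<gamma> lam T2 > 0"
    using Z_pos[OF af lp g1] Z_pos[OF af lp g2] by auto
  have p12: "pairok \<beta> \<gamma> lam T1 T2"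
  proof -
    have "Z1 \<beta> \<gamma> lam T1 / (lam * Z0 \<beta> \<gamma> lam T1) = Z1 \<beta> \<gamma> lam T2 / (lam * Z0 \<beta> \<gamma> lam T2)"
      using R12 gadget_vals(1)[OF af lp g1] gadget_vals(1)[OF af lp g2] by simp
    then have "Z1 \<beta> \<gamma> lam T1 * Z0 \<beta> \<gamma> lam T2 = Z1 \<beta> \<gamma> lam T2 * Z0 \<beta> \<gamma> lam T1"
      using pos lp by (simp add: field_simps)
    moreover have "N1 \<beta> \<gamma> lam T1 / Z1 \<beta> \<gamma> lam T1 - N0 \<beta> \<gamma> lam T1 / Z0 \<beta> \<gamma> lam T1 \<noteq>
        N1 \<beta> \<gamma> lam T2 / Z1 \<beta> \<gamma> lam T2 - N0 \<beta> \<gamma> lam T2 / Z0 \<beta> \<gamma> lam T2"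
      using M12 gadget_vals(2)[OF af lp g1] gadget_vals(2)[OF af lp g2] by simp
    ultimately show ?thesis unfolding pairok_def by simp
  qed
  define R where "R = Rf \<beta> \<gamma> lam T1"
  have Rp: "R > 0" using Rf_pos[OF af lp g1] R_def by simp
  obtain S1 S2 where GS1: "GG \<beta> \<gamma> lam \<Delta> S1" and GS2: "GG \<beta> \<gamma> lam \<Delta> S2" and pS: "pairok \<beta> \<gamma> lam S1 S2"
    and nf: "ff \<beta> \<gamma> lam (Rf \<beta> \<gamma> lam S1) \<noteq> Rf \<beta> \<gamma> lam S1"
  proof (cases "ff \<beta> \<gamma> lam R = R")
    case False
    then show ?thesis using that[OF G1 G2 p12] R_def by simp
  next
    case True
    let ?c = "cval \<beta> \<gamma> lam"
    have cp: "?c > 0" using cval_pos[OF af lp] .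
    have c1: "?c \<noteq> 1" using cval_ne1[OF af lp] ex by simp
    have Re: "Rf \<beta> \<gamma> lam (esc \<beta> \<gamma> lam T1) = ff \<beta> \<gamma> lam (?c * R)"
      using Rf_esc[OF af lp g1] True R_def by simp
    have cRp: "?c * R > 0" using cp Rp by simp
    have wp: "ff \<beta> \<gamma> lam (?c * R) > 0" using ff_pos[OF af lp cRp] .
    have "ff \<beta> \<gamma> lam (ff \<beta> \<gamma> lam (?c * R)) \<noteq> ff \<beta> \<gamma> lam (?c * R)"
    proof
      assume h: "ff \<beta> \<gamma> lam (ff \<beta> \<gamma> lam (?c * R)) = ff \<beta> \<gamma> lam (?c * R)"
      have "ff \<beta> \<gamma> lam (?c * R) = R" using fix_unique[OF af lp wp Rp h True] .
      then have "ff \<beta> \<gamma> lam (?c * R) = ff \<beta> \<gamma> lam R" using True by simp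
      then have "?c * R = R" using ff_inj[OF af lp cRp Rp] by simp
      then show False using c1 Rp by simp
    qed
    then show ?thesis
      using that[OF GG_esc[OF af lp D G1] GG_esc[OF af lp D G2] pair_esc[OF af lp g1 g2 p12]] Re by simp
  qed
  define EE where "EE = gext \<circ> gext"
  define T1s where "T1s j = (EE ^^ j) S1" for j
  define T2s where "T2s j = (EE ^^ j) S2" for j
  have inv_all: "\<And>j. GG \<beta> \<gamma> lam \<Delta> (T1s j) \<and> GG \<beta> \<gamma> lam \<Delta> (T2s j) \<and> pairok \<beta> \<gamma> lam (T1s j) (T2s j)
      \<and> Rf \<beta> \<gamma> lam (T1s j) = (hh \<beta> \<gamma> lam ^^ j) (Rf \<beta> \<gamma> lam S1)"
  proof -
    fix j show "GG \<beta> \<gamma> lam \<Delta> (T1s j) \<and> GG \<beta> \<gamma> lam \<Delta> (T2s j) \<and> pairok \<beta> \<gamma> lam (T1s j) (T2s j)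
      \<and> Rf \<beta> \<gamma> lam (T1s j) = (hh \<beta> \<gamma> lam ^^ j) (Rf \<beta> \<gamma> lam S1)"
    proof (induction j)
      case 0 then show ?case using GS1 GS2 pS unfolding T1s_def T2s_def by simp
    next
      case (Suc j)
      have a1: "GG \<beta> \<gamma> lam \<Delta> (T1s j)" and a2: "GG \<beta> \<gamma> lam \<Delta> (T2s j)" and ap: "pairok \<beta> \<gamma> lam (T1s j) (T2s j)"
        and aR: "Rf \<beta> \<gamma> lam (T1s j) = (hh \<beta> \<gamma> lam ^^ j) (Rf \<beta> \<gamma> lam S1)" using Suc by auto
      have e1: "T1s (Suc j) = gext (gext (T1s j))" and e2: "T2s (Suc j) = gext (gext (T2s j))"
        unfolding T1s_def T2s_def EE_def by simp_all
      have b1: "good (T1s j)" and b2: "good (T2s j)" using GG_good[OF af lp a1] GG_good[OF af lp a2] by auto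
      have "GG \<beta> \<gamma> lam \<Delta> (T1s (Suc j))" unfolding e1 using GG_ext[OF af lp D GG_ext[OF af lp D a1]] .
      moreover have "GG \<beta> \<gamma> lam \<Delta> (T2s (Suc j))" unfolding e2 using GG_ext[OF af lp D GG_ext[OF af lp D a2]] .
      moreover have "pairok \<beta> \<gamma> lam (T1s (Suc j)) (T2s (Suc j))" unfolding e1 e2
        using pair_ext[OF af lp good_ext[OF af lp b1] good_ext[OF af lp b2] pair_ext[OF af lp b1 b2 ap]] .
      moreover have "Rf \<beta> \<gamma> lam (T1s (Suc j)) = (hh \<beta> \<gamma> lam ^^ Suc j) (Rf \<beta> \<gamma> lam S1)"
        unfolding e1 using Rf_ext[OF af lp good_ext[OF af lp b1]] Rf_ext[OF af lp b1] aR
        by (simp add: hh_def[OF af lp])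
      ultimately show ?case by simp
    qed
  qed
  have Sp: "Rf \<beta> \<gamma> lam S1 > 0" using Rf_pos[OF af lp GG_good[OF af lp GS1]] .
  show ?thesis
  proof (intro exI conjI allI)
    fix j
    have a1: "GG \<beta> \<gamma> lam \<Delta> (T1s j)" and a2: "GG \<beta> \<gamma> lam \<Delta> (T2s j)" and ap: "pairok \<beta> \<gamma> lam (T1s j) (T2s j)"
      using inv_all by auto
    have b1: "good (T1s j)" and b2: "good (T2s j)" using GG_good[OF af lp a1] GG_good[OF af lp a2] by auto
    show "field_gadget \<beta> \<gamma> lam (T1s j)" "field_gadget \<beta> \<gamma> lam (T2s j)"
      "gadget_max_degree_le (T1s j) \<Delta>" "gadget_max_degree_le (T2s j) \<Delta>"
      using a1 a2 unfolding GG_def by auto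
    show "eff_field \<beta> \<gamma> lam (T1s j) = eff_field \<beta> \<gamma> lam (T2s j)"
      using gadget_vals(1)[OF af lp b1] gadget_vals(1)[OF af lp b2] pairok_Rf[OF af lp b1 b2 ap]
      unfolding Rf_def by simp
    show "mag_gap \<beta> \<gamma> lam (T1s j) \<noteq> mag_gap \<beta> \<gamma> lam (T2s j)"
      using gadget_vals(2)[OF af lp b1] gadget_vals(2)[OF af lp b2] ap unfolding pairok_def by simp
  next
    have "\<And>j. eff_field \<beta> \<gamma> lam (T1s j) = (hh \<beta> \<gamma> lam ^^ j) (Rf \<beta> \<gamma> lam S1)"
    proof -
      fix j
      have "good (T1s j)" using GG_good[OF af lp] inv_all by blast
      then show "eff_field \<beta> \<gamma> lam (T1s j) = (hh \<beta> \<gamma> lam ^^ j) (Rf \<beta> \<gamma> lam S1)"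
        using gadget_vals(1)[OF af lp] inv_all unfolding Rf_def by metis
    qed
    then show "inj (\<lambda>j. eff_field \<beta> \<gamma> lam (T1s j))"
      using seq_inj[OF af lp Sp nf] by simp
  qed
qed

end
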